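(* Let $\mathcal{M}$ be a $W^*$-algebra and let $\mathcal{G}(\mathcal{M})\subset\mathcal{M}$ be the set of partially invertible elements. Then $\mathcal{G}(\mathcal{M})$ is a groupoid with base set $\mathcal{L}(\mathcal{M})$ when equipped with the following structure: (i) the identity section $\varepsilon:\mathcal{L}(\mathcal{M})\hookrightarrow\mathcal{G}(\mathcal{M})$ is the inclusion; (ii) the source and target maps are $\mathbf{s}(x):=r(x)=u^*u$ and $\mathbf{t}(x):=l(x)=uu^*$, where $x=u|x|$ is the polar decomposition; (iii) the product on the set of composable pairs $\mathcal{G}(\mathcal{M})^{(2)}=\{(x,y)\in\mathcal{G}(\mathcal{M})\times\mathcal{G}(\mathcal{M}):\ \mathbf{s}(x)=\mathbf{t}(y)\}$ is $(x,y)\mapsto xy$, the product in $\mathcal{M}$; (iv) the inverse map is $\iota(x):=|x|^{-1}u^*$, where $|x|^{-1}$ is the inverse of $|x|$ in $p\mathcal{M}p$, $p=s(|x|)$.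
   Context: $\mathcal{M}$ is a $W^*$-algebra (von Neumann algebra) with unit $1$. $\mathcal{L}(\mathcal{M})$ is the set of orthogonal projections $p=p^*=p^2\in\mathcal{M}$. For $x\in\mathcal{M}$, the left support $l(x)$ (resp. right support $r(x)$) is the smallest projection $e\in\mathcal{L}(\mathcal{M})$ with $ex=x$ (resp. $xe=x$); for self-adjoint $x$ one writes $s(x):=l(x)=r(x)$. Every $x\in\mathcal{M}$ has a unique polar decomposition $x=u|x|$ with $|x|=(x^*x)^{1/2}$ and $u$ a partial isometry with $u^*u=r(x)=s(|x|)$, $uu^*=l(x)$. For $p\in\mathcal{L}(\mathcal{M})$, $p\mathcal{M}p$ is a $W^*$-algebra with unit $p$. The set of partially invertible elements is $\mathcal{G}(\mathcal{M}):=\{x\in\mathcal{M}:\ |x|\text{ is invertible in }p\mathcal{M}p,\ \text{where }p=s(|x|)\}$. A groupoid over a base set $B$ is a set $G$ with source and target maps $\mathbf{s},\mathbf{t}:G\to B$, an associative product defined on pairs $(g,h)$ with $\mathbf{s}(g)=\mathbf{t}(h)$ satisfying $\mathbf{s}(gh)=\mathbf{s}(h)$, $\mathbf{t}(gh)=\mathbf{t}(g)$, an injective identity section $\varepsilon:B\to G$ with $\varepsilon(\mathbf{t}(g))g=g=g\varepsilon(\mathbf{s}(g))$, and an inversion $\iota$ with $\iota(g)g=\varepsilon(\mathbf{s}(g))$, $g\iota(g)=\varepsilon(\mathbf{t}(g))$. *)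

theory Defs
  imports Complex_Main
begin

text \<open>A complex Hilbert space: a real Banach space with a compatible complex scalar
multiplication and a complex inner product (linear in the second argument,
conjugate-linear in the first) inducing the norm.\<close>

class chilbert = banach +
  fixes cscale :: "complex \<Rightarrow> 'a \<Rightarrow> 'a"
    and cinner :: "'a \<Rightarrow> 'a \<Rightarrow> complex"
  assumes cscale_of_real: "cscale (of_real r) x = scaleR r x"
    and cscale_add_right: "cscale a (x + y) = cscale a x + cscale a y"
    and cscale_add_left: "cscale (a + b) x = cscale a x + cscale b x"
    and cscale_cscale: "cscale a (cscale b x) = cscale (a * b) x"
    and cinner_conj: "cinner x y = cnj (cinner y x)"
    and cinner_add_right: "cinner x (y + z) = cinner x y + cinner x z"
    and cinner_cscale_right: "cinner x (cscale a y) = a * cinner x y"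
    and cinner_self: "cinner x x = complex_of_real ((norm x)\<^sup>2)"

definition bounded_op :: "('h::chilbert \<Rightarrow> 'h) \<Rightarrow> bool" where
  "bounded_op T \<longleftrightarrow> bounded_linear T \<and> (\<forall>a h. T (cscale a h) = cscale a (T h))"

definition adj :: "('h::chilbert \<Rightarrow> 'h) \<Rightarrow> ('h \<Rightarrow> 'h)" where
  "adj T = (THE S. \<forall>x y. cinner (T x) y = cinner x (S y))"

definition commutant :: "('h::chilbert \<Rightarrow> 'h) set \<Rightarrow> ('h \<Rightarrow> 'h) set" where
  "commutant S = {T. bounded_op T \<and> (\<forall>A\<in>S. T \<circ> A = A \<circ> T)}"

text \<open>A W*-algebra, realised concretely as a von Neumann algebra: a unital
*-subalgebra of the bounded operators on a complex Hilbert space that equals its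
double commutant.\<close>

definition von_neumann_algebra :: "('h::chilbert \<Rightarrow> 'h) set \<Rightarrow> bool" where
  "von_neumann_algebra M \<longleftrightarrow>
     (\<forall>T\<in>M. bounded_op T) \<and> id \<in> M \<and>
     (\<forall>S\<in>M. \<forall>T\<in>M. (\<lambda>h. S h + T h) \<in> M) \<and>
     (\<forall>a. \<forall>T\<in>M. (\<lambda>h. cscale a (T h)) \<in> M) \<and>
     (\<forall>S\<in>M. \<forall>T\<in>M. S \<circ> T \<in> M) \<and>
     (\<forall>T\<in>M. adj T \<in> M) \<and>
     commutant (commutant M) = M"

definition projections :: "('h::chilbert \<Rightarrow> 'h) set \<Rightarrow> ('h \<Rightarrow> 'h) set" where
  "projections M = {p\<in>M. adj p = p \<and> p \<circ> p = p}"

text \<open>Left support: smallest projection e (w.r.t. the order e \<le> f iff f e = e)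
with e x = x; right support: smallest projection e with x e = x.\<close>

definition lsupp :: "('h::chilbert \<Rightarrow> 'h) set \<Rightarrow> ('h \<Rightarrow> 'h) \<Rightarrow> ('h \<Rightarrow> 'h)" where
  "lsupp M x = (THE e. e \<in> projections M \<and> e \<circ> x = x \<and>
                   (\<forall>f\<in>projections M. f \<circ> x = x \<longrightarrow> f \<circ> e = e))"

definition rsupp :: "('h::chilbert \<Rightarrow> 'h) set \<Rightarrow> ('h \<Rightarrow> 'h) \<Rightarrow> ('h \<Rightarrow> 'h)" where
  "rsupp M x = (THE e. e \<in> projections M \<and> x \<circ> e = x \<and>
                   (\<forall>f\<in>projections M. x \<circ> f = x \<longrightarrow> f \<circ> e = e))"

definition supp :: "('h::chilbert \<Rightarrow> 'h) set \<Rightarrow> ('h \<Rightarrow> 'h) \<Rightarrow> ('h \<Rightarrow> 'h)" where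
  "supp M x = lsupp M x"

definition positive_op :: "('h::chilbert \<Rightarrow> 'h) \<Rightarrow> bool" where
  "positive_op a \<longleftrightarrow> (\<forall>h. Im (cinner h (a h)) = 0 \<and> 0 \<le> Re (cinner h (a h)))"

definition absv :: "('h::chilbert \<Rightarrow> 'h) set \<Rightarrow> ('h \<Rightarrow> 'h) \<Rightarrow> ('h \<Rightarrow> 'h)" where
  "absv M x = (THE a. a \<in> M \<and> positive_op a \<and> a \<circ> a = adj x \<circ> x)"

definition polar :: "('h::chilbert \<Rightarrow> 'h) set \<Rightarrow> ('h \<Rightarrow> 'h) \<Rightarrow> ('h \<Rightarrow> 'h)" where
  "polar M x = (THE u. u \<in> M \<and> x = u \<circ> absv M x \<and>
                   adj u \<circ> u = rsupp M x \<and> u \<circ> adj u = lsupp M x)"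

text \<open>Inverse of a in the corner algebra pMp (with unit p).\<close>
definition is_inverse_in_corner ::
  "('h::chilbert \<Rightarrow> 'h) set \<Rightarrow> ('h \<Rightarrow> 'h) \<Rightarrow> ('h \<Rightarrow> 'h) \<Rightarrow> ('h \<Rightarrow> 'h) \<Rightarrow> bool" where
  "is_inverse_in_corner M p a b \<longleftrightarrow> b \<in> M \<and> p \<circ> b \<circ> p = b \<and> b \<circ> a = p \<and> a \<circ> b = p"

definition corner_inv :: "('h::chilbert \<Rightarrow> 'h) set \<Rightarrow> ('h \<Rightarrow> 'h) \<Rightarrow> ('h \<Rightarrow> 'h) \<Rightarrow> ('h \<Rightarrow> 'h)" where
  "corner_inv M p a = (THE b. is_inverse_in_corner M p a b)"

definition partially_invertible :: "('h::chilbert \<Rightarrow> 'h) set \<Rightarrow> ('h \<Rightarrow> 'h) set" where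
  "partially_invertible M =
     {x\<in>M. \<exists>b. is_inverse_in_corner M (supp M (absv M x)) (absv M x) b}"

definition pinv :: "('h::chilbert \<Rightarrow> 'h) set \<Rightarrow> ('h \<Rightarrow> 'h) \<Rightarrow> ('h \<Rightarrow> 'h)" where
  "pinv M x = corner_inv M (supp M (absv M x)) (absv M x) \<circ> adj (polar M x)"

definition groupoid ::
  "'g set \<Rightarrow> 'b set \<Rightarrow> ('g \<Rightarrow> 'b) \<Rightarrow> ('g \<Rightarrow> 'b) \<Rightarrow> ('g \<Rightarrow> 'g \<Rightarrow> 'g)
   \<Rightarrow> ('b \<Rightarrow> 'g) \<Rightarrow> ('g \<Rightarrow> 'g) \<Rightarrow> bool" where
  "groupoid G B src tgt mult eps iota \<longleftrightarrow>
     (\<forall>g\<in>G. src g \<in> B \<and> tgt g \<in> B) \<and>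
     (\<forall>g\<in>G. \<forall>h\<in>G. src g = tgt h \<longrightarrow>
        mult g h \<in> G \<and> src (mult g h) = src h \<and> tgt (mult g h) = tgt g) \<and>
     (\<forall>g\<in>G. \<forall>h\<in>G. \<forall>k\<in>G. src g = tgt h \<and> src h = tgt k \<longrightarrow>
        mult (mult g h) k = mult g (mult h k)) \<and>
     (\<forall>b\<in>B. eps b \<in> G \<and> src (eps b) = b \<and> tgt (eps b) = b) \<and>
     inj_on eps B \<and>
     (\<forall>g\<in>G. mult (eps (tgt g)) g = g \<and> mult g (eps (src g)) = g) \<and>
     (\<forall>g\<in>G. iota g \<in> G \<and> src (iota g) = tgt g \<and> tgt (iota g) = src g \<and>
        mult (iota g) g = eps (src g) \<and> mult g (iota g) = eps (tgt g))"

end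

theory Submission
  imports Defs "HOL-Analysis.Analysis" "HOL-Computational_Algebra.Formal_Power_Series"
begin

lemma cinner_add_left: "cinner (x + y) z = cinner x z + cinner y z"
  by (metis cinner_conj cinner_add_right complex_cnj_add)

lemma cinner_cscale_left: "cinner (cscale a x) y = cnj a * cinner x y"
  by (metis cinner_conj cinner_cscale_right complex_cnj_mult complex_cnj_cnj)

lemma cinner_zero_right[simp]: "cinner x 0 = 0"
  using cinner_add_right[of x 0 0] by simp

lemma cinner_zero_left[simp]: "cinner 0 x = 0"
  using cinner_add_left[of 0 0 x] by simp

lemma cinner_minus_right: "cinner x (- y) = - cinner x y"
  using cinner_add_right[of x y "-y"] by (simp add: add_eq_0_iff)

lemma cinner_minus_left: "cinner (- x) y = - cinner x y"
  using cinner_add_left[of x "-x" y] by (simp add: add_eq_0_iff)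

lemma cinner_diff_right: "cinner x (y - z) = cinner x y - cinner x z"
  using cinner_add_right[of x y "-z"] cinner_minus_right[of x z] by simp

lemma cinner_diff_left: "cinner (x - y) z = cinner x z - cinner y z"
  using cinner_add_left[of x "-y" z] cinner_minus_left[of y z] by simp

lemma cinner_scaleR_right: "cinner x (r *\<^sub>R y) = of_real r * cinner x y"
  by (metis cinner_cscale_right cscale_of_real)

lemma cinner_scaleR_left: "cinner (r *\<^sub>R x) y = of_real r * cinner x y"
  by (metis cinner_cscale_left cscale_of_real complex_cnj_complex_of_real)

lemma cinner_sum_right: "cinner x (sum f A) = (\<Sum>i\<in>A. cinner x (f i))"
  by (induction A rule: infinite_finite_induct) (auto simp: cinner_add_right)

lemma cinner_sum_left: "cinner (sum f A) x = (\<Sum>i\<in>A. cinner (f i) x)"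
  by (induction A rule: infinite_finite_induct) (auto simp: cinner_add_left)

lemma cinner_self_Re: "Re (cinner x x) = (norm x)\<^sup>2"
  by (simp add: cinner_self)

lemma cinner_self_Im: "Im (cinner x x) = 0"
  by (simp add: cinner_self)

lemma cinner_self_eq_0[simp]: "cinner x x = 0 \<longleftrightarrow> x = 0"
  by (simp add: cinner_self)

lemma cscale_zero_right[simp]: "cscale a 0 = 0"
  using cscale_add_right[of a 0 0] by simp

lemma cscale_zero_left[simp]: "cscale 0 x = 0"
  using cscale_of_real[of 0 x] by simp

lemma cscale_one[simp]: "cscale 1 x = x"
  using cscale_of_real[of 1 x] by simp

lemma cscale_minus_right: "cscale a (- x) = - cscale a x"
  using cscale_add_right[of a x "-x"] by (simp add: add_eq_0_iff)

lemma cscale_diff_right: "cscale a (x - y) = cscale a x - cscale a y"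
  using cscale_add_right[of a x "-y"] cscale_minus_right[of a y] by simp

lemma cscale_minus_left: "cscale (- a) x = - cscale a x"
  using cscale_add_left[of a "-a" x] by (simp add: add_eq_0_iff)

lemma cscale_diff_left: "cscale (a - b) x = cscale a x - cscale b x"
  using cscale_add_left[of a "-b" x] cscale_minus_left[of b x] by simp

lemma cscale_scaleR_comm: "cscale a (r *\<^sub>R x) = r *\<^sub>R cscale a x"
  by (metis cscale_cscale cscale_of_real mult.commute)

lemma cinner_ext: "(\<And>z. cinner z x = cinner z y) \<Longrightarrow> x = y"
  by (metis cinner_diff_right cinner_self_eq_0 eq_iff_diff_eq_0)

lemma cinner_ext_left: "(\<And>z. cinner x z = cinner y z) \<Longrightarrow> x = y"
  by (metis cinner_diff_left cinner_self_eq_0 eq_iff_diff_eq_0)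

lemma norm_cscale: "norm (cscale a x) = cmod a * norm x"
proof -
  have "(norm (cscale a x))\<^sup>2 = Re (cinner (cscale a x) (cscale a x))"
    by (simp add: cinner_self)
  also have "\<dots> = Re (cnj a * a * cinner x x)"
    by (simp only: cinner_cscale_left cinner_cscale_right mult_ac)
  also have "cnj a * a = of_real ((cmod a)\<^sup>2)" using complex_norm_square[of a] by (simp add: mult.commute)
  also have "Re (of_real ((cmod a)\<^sup>2) * cinner x x) = (cmod a)\<^sup>2 * (norm x)\<^sup>2"
    by (simp add: cinner_self)
  finally have "(norm (cscale a x))\<^sup>2 = (cmod a * norm x)\<^sup>2" by (simp add: power_mult_distrib)
  then show ?thesis by (simp add: power2_eq_iff_nonneg)
qed

lemma norm_add_sq: "(norm (x + y))\<^sup>2 = (norm x)\<^sup>2 + (norm y)\<^sup>2 + 2 * Re (cinner x y)"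
proof -
  have "(norm (x + y))\<^sup>2 = Re (cinner (x+y) (x+y))" by (simp add: cinner_self)
  also have "\<dots> = Re (cinner x x) + Re (cinner y y) + Re (cinner x y) + Re (cinner y x)"
    by (simp add: cinner_add_left cinner_add_right)
  also have "Re (cinner y x) = Re (cinner x y)" by (subst cinner_conj) simp
  finally show ?thesis by (simp add: cinner_self)
qed

lemma Re_cinner_le: "Re (cinner x y) \<le> norm x * norm y"
proof -
  have "(norm (x + y))\<^sup>2 \<le> (norm x + norm y)\<^sup>2"
    by (simp add: norm_triangle_ineq power_mono)
  then show ?thesis unfolding norm_add_sq by (simp add: power2_sum)
qed

lemma cinner_Cauchy_Schwarz: "cmod (cinner x y) \<le> norm x * norm y"
proof (cases "cinner x y = 0")
  case True then show ?thesis by simp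
next
  case False
  define u where "u = cnj (cinner x y) / of_real (cmod (cinner x y))"
  have u1: "cmod u = 1" using False by (simp add: u_def norm_divide)
  have "cinner x (cscale u y) = of_real (cmod (cinner x y))"
    using False by (simp add: cinner_cscale_right u_def complex_mult_cnj[symmetric] field_simps
      cmod_power2 complex_norm_square[symmetric] power2_eq_square)
  then have "cmod (cinner x y) = Re (cinner x (cscale u y))" by simp
  also have "\<dots> \<le> norm x * norm (cscale u y)" by (rule Re_cinner_le)
  also have "\<dots> = norm x * norm y" by (simp add: norm_cscale u1)
  finally show ?thesis .
qed

lemma bounded_linear_cinner_right: "bounded_linear (cinner x)"
  apply (rule bounded_linear_intro[where K="norm x"])
    apply (auto simp: cinner_add_right cinner_scaleR_right scaleR_conv_of_real)
  using cinner_Cauchy_Schwarz by (metis mult.commute)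

lemma bounded_linear_cinner_left: "bounded_linear (\<lambda>y. cinner y x)"
  by (rule bounded_linear_intro[where K="norm x"])
    (auto simp: cinner_add_left cinner_scaleR_left scaleR_conv_of_real cinner_Cauchy_Schwarz mult.commute)

lemma bounded_linear_cscale: "bounded_linear (cscale a)"
  by (rule bounded_linear_intro[where K="cmod a"])
    (auto simp: cscale_add_right cscale_scaleR_comm norm_cscale mult.commute)

lemma continuous_on_cinner_right[continuous_intros]:
  "continuous_on S f \<Longrightarrow> continuous_on S (\<lambda>y. cinner x (f y))"
  using bounded_linear.continuous_on[OF bounded_linear_cinner_right] .

lemma isCont_cinner_right: "isCont (cinner x) y"
  by (rule linear_continuous_at[OF bounded_linear_cinner_right])

lemma isCont_cinner_left: "isCont (\<lambda>y. cinner y x) y"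
  by (rule linear_continuous_at[OF bounded_linear_cinner_left])

lemma isCont_cscale: "isCont (cscale a) y"
  by (rule linear_continuous_at[OF bounded_linear_cscale])



section \<open>Projection theorem\<close>

definition csubspace :: "'h::chilbert set \<Rightarrow> bool" where
  "csubspace V \<longleftrightarrow> 0 \<in> V \<and> (\<forall>x\<in>V. \<forall>y\<in>V. x + y \<in> V) \<and> (\<forall>a. \<forall>x\<in>V. cscale a x \<in> V)"

lemma csubspace_diff: "csubspace V \<Longrightarrow> x \<in> V \<Longrightarrow> y \<in> V \<Longrightarrow> x - y \<in> V"
  unfolding csubspace_def
  by (metis cscale_minus_left cscale_one diff_conv_add_uminus)

lemma csubspace_scaleR: "csubspace V \<Longrightarrow> x \<in> V \<Longrightarrow> r *\<^sub>R x \<in> V"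
  unfolding csubspace_def by (metis cscale_of_real)

lemma norm_diff_sq: fixes x y :: "'h::chilbert" shows "(norm (x - y))\<^sup>2 = (norm x)\<^sup>2 + (norm y)\<^sup>2 - 2 * Re (cinner x y)"
  using norm_add_sq[of x "-y"] by (simp add: cinner_minus_right)

lemma parallelogram: fixes x y :: "'h::chilbert" shows
  "(norm (x - y))\<^sup>2 + (norm (x + y))\<^sup>2 = 2 * (norm x)\<^sup>2 + 2 * (norm y)\<^sup>2"
  using norm_add_sq[of x y] norm_diff_sq[of x y] by simp

lemma quad_nonneg_zero:
  fixes R c :: real
  assumes "\<And>t. 0 \<le> - 2 * t * R + t\<^sup>2 * c" "0 \<le> c"
  shows "R = 0"
proof -
  define t where "t = R / (c + 1)"
  have c1: "c + 1 > 0" using assms(2) by simp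
  have tR: "R = t * (c+1)" using c1 by (simp add: t_def)
  have "0 \<le> - 2 * t * R + t\<^sup>2 * c" by (rule assms(1))
  also have "- 2 * t * R + t\<^sup>2 * c = - ((t*t) * (c + 2))" unfolding tR by (simp add: power2_eq_square algebra_simps)
  finally have "(t * t) * (c + 2) \<le> 0" by linarith
  then have "t * t \<le> 0" using assms(2) by (simp add: mult_le_0_iff)
  then have "t = 0" by (auto simp: mult_le_0_iff)
  then show ?thesis using tR by simp
qed

lemma proj_exists:
  fixes V :: "'h::chilbert set"
  assumes V: "csubspace V" "closed V"
  shows "\<exists>p\<in>V. \<forall>v\<in>V. cinner v (h - p) = 0"
proof -
  define S where "S = (\<lambda>v. (norm (h - v))\<^sup>2) ` V"
  define D where "D = Inf S"
  have S0: "S \<noteq> {}" using V by (auto simp: S_def csubspace_def)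
  have Sb: "bdd_below S" unfolding S_def by (rule bdd_belowI[where m=0]) auto
  have Dle: "D \<le> (norm (h - v))\<^sup>2" if "v \<in> V" for v
    unfolding D_def by (rule cInf_lower) (use that Sb in \<open>auto simp: S_def\<close>)
  have "\<forall>n. \<exists>v. v \<in> V \<and> (norm (h - v))\<^sup>2 < D + 1 / (Suc n)"
  proof
    fix n :: nat
    have "Inf S < D + 1 / (Suc n)" unfolding D_def by simp
    from cInf_lessD[OF S0 this] show "\<exists>v. v \<in> V \<and> (norm (h - v))\<^sup>2 < D + 1 / (Suc n)"
      by (auto simp: S_def)
  qed
  then obtain v where vV: "\<And>n. v n \<in> V" and vD: "\<And>n. (norm (h - v n))\<^sup>2 < D + 1 / (Suc n)"
    by metis
  have key: "(norm (v m - v n))\<^sup>2 \<le> 2 / Suc m + 2 / Suc n" for m n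
  proof -
    have mid: "(1/2::real) *\<^sub>R (v m + v n) \<in> V"
      using V vV by (auto simp: csubspace_def intro!: csubspace_scaleR)
    have e1: "(h - v n) + (h - v m) = 2 *\<^sub>R (h - (1/2::real) *\<^sub>R (v m + v n))"
      by (simp add: algebra_simps scaleR_2)
    have "(norm ((h - v n) + (h - v m)))\<^sup>2 = 4 * (norm (h - (1/2::real) *\<^sub>R (v m + v n)))\<^sup>2"
      unfolding e1 by (simp add: power2_eq_square)
    also have "\<dots> \<ge> 4 * D" using Dle[OF mid] by simp
    finally have a: "(norm ((h - v n) + (h - v m)))\<^sup>2 \<ge> 4 * D" .
    have eq: "(h - v n) - (h - v m) = v m - v n" by simp
    have "(norm (v m - v n))\<^sup>2 + (norm ((h - v n) + (h - v m)))\<^sup>2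
          = 2 * (norm (h - v n))\<^sup>2 + 2 * (norm (h - v m))\<^sup>2"
      using parallelogram[of "h - v n" "h - v m"] unfolding eq .
    then show ?thesis using a vD[of m] vD[of n] by linarith
  qed
  have "Cauchy v"
  proof (rule metric_CauchyI)
    fix e :: real assume e: "e > 0"
    obtain N :: nat where N: "4 / e\<^sup>2 < N" using reals_Archimedean2 by blast
    have "N > 0" using N e by (metis gr0I of_nat_0 divide_pos_pos zero_less_numeral zero_less_power not_less_iff_gr_or_eq)
    show "\<exists>M. \<forall>m\<ge>M. \<forall>n\<ge>M. dist (v m) (v n) < e"
    proof (intro exI allI impI)
      fix m n assume mn: "N \<le> m" "N \<le> n"
      have "2 / real (Suc m) \<le> 2 / N" using mn \<open>N>0\<close> by (intro divide_left_mono) auto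
      moreover have "2 / real (Suc n) \<le> 2 / N" using mn \<open>N>0\<close> by (intro divide_left_mono) auto
      ultimately have "(norm (v m - v n))\<^sup>2 \<le> 4 / N" using key[of m n] by simp
      also have "\<dots> < e\<^sup>2" using N e \<open>N>0\<close> by (simp add: field_simps)
      finally have "(norm (v m - v n))\<^sup>2 < e\<^sup>2" .
      then show "dist (v m) (v n) < e" using e by (simp add: dist_norm power_less_imp_less_base)
    qed
  qed
  then obtain p where p: "v \<longlonglongrightarrow> p" using Cauchy_convergent_iff convergent_def by blast
  have pV: "p \<in> V" using V(2) vV p closed_sequentially by blast
  have lim1: "(\<lambda>n. (norm (h - v n))\<^sup>2) \<longlonglongrightarrow> (norm (h - p))\<^sup>2"
    by (intro tendsto_intros p)
  have lim2: "(\<lambda>n. D + 1 / Suc n) \<longlonglongrightarrow> D + 0"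
    by (intro tendsto_intros LIMSEQ_Suc[OF lim_inverse_n'] ) 
  have "(norm (h - p))\<^sup>2 \<le> D + 0"
    by (rule LIMSEQ_le[OF lim1 lim2]) (use vD less_imp_le in auto)
  then have pD: "(norm (h - p))\<^sup>2 = D" using Dle[OF pV] by simp
  have Re0: "Re (cinner (h - p) w) = 0" if "w \<in> V" for w
  proof (rule quad_nonneg_zero)
    fix t :: real
    have "p + t *\<^sub>R w \<in> V" using csubspace_scaleR[OF V(1) that, of t] V(1) pV unfolding csubspace_def by blast
    then have "D \<le> (norm (h - (p + t *\<^sub>R w)))\<^sup>2" by (rule Dle)
    also have "h - (p + t *\<^sub>R w) = (h - p) - t *\<^sub>R w" by simp
    also have "(norm \<dots>)\<^sup>2 = (norm (h - p))\<^sup>2 + t\<^sup>2 * (norm w)\<^sup>2 - 2 * t * Re (cinner (h - p) w)"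
      by (simp add: norm_diff_sq cinner_scaleR_right power_mult_distrib)
    finally show "0 \<le> - 2 * t * Re (cinner (h - p) w) + t\<^sup>2 * (norm w)\<^sup>2" using pD by simp
  qed simp
  have "cinner v (h - p) = 0" if "v \<in> V" for v
  proof -
    have "cscale \<i> v \<in> V" using V that by (auto simp: csubspace_def)
    from Re0[OF this] have "Re (\<i> * cinner (h - p) v) = 0" by (simp add: cinner_cscale_right)
    then have "Im (cinner (h - p) v) = 0" by simp
    moreover have "Re (cinner (h - p) v) = 0" using Re0 that by simp
    ultimately have "cinner (h - p) v = 0" by (simp add: complex_eq_iff)
    then show ?thesis by (subst cinner_conj) simp
  qed
  then show ?thesis using pV by blast
qed

definition oproj :: "'h::chilbert set \<Rightarrow> 'h \<Rightarrow> 'h" where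
  "oproj V h = (THE p. p \<in> V \<and> (\<forall>v\<in>V. cinner v (h - p) = 0))"

lemma oproj_eqI:
  assumes V: "csubspace V" and p: "p \<in> V" "\<forall>v\<in>V. cinner v (h - p) = 0"
  shows "oproj V h = p"
  unfolding oproj_def
proof (rule the_equality)
  show "p \<in> V \<and> (\<forall>v\<in>V. cinner v (h - p) = 0)" using p by blast
  fix q assume q: "q \<in> V \<and> (\<forall>v\<in>V. cinner v (h - q) = 0)"
  have d: "q - p \<in> V" using csubspace_diff[OF V] q p by blast
  have "cinner (q - p) (h - p) = 0" "cinner (q - p) (h - q) = 0" using p q d by auto
  then have "cinner (q - p) ((h - p) - (h - q)) = 0" by (simp add: cinner_diff_right)
  then have "cinner (q - p) (q - p) = 0" by simp
  then show "q = p" by simp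
qed

lemma oproj:
  assumes "csubspace V" "closed V"
  shows "oproj V h \<in> V" "\<And>v. v \<in> V \<Longrightarrow> cinner v (h - oproj V h) = 0"
proof -
  obtain p where "p \<in> V" "\<forall>v\<in>V. cinner v (h - p) = 0" using proj_exists[OF assms] by blast
  moreover from oproj_eqI[OF assms(1) this] have "oproj V h = p" .
  ultimately show "oproj V h \<in> V" "\<And>v. v \<in> V \<Longrightarrow> cinner v (h - oproj V h) = 0" by auto
qed

section \<open>Riesz representation and adjoints\<close>

lemma riesz:
  fixes \<phi> :: "'h::chilbert \<Rightarrow> complex"
  assumes lin: "bounded_linear \<phi>" and hom: "\<And>a x. \<phi> (cscale a x) = a * \<phi> x"
  shows "\<exists>z. \<forall>x. \<phi> x = cinner z x"
proof (cases "\<forall>x. \<phi> x = 0")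
  case True then show ?thesis by (intro exI[of _ 0]) simp
next
  case False
  then obtain w where w: "\<phi> w \<noteq> 0" by blast
  interpret bounded_linear \<phi> by fact
  define K where "K = {x. \<phi> x = 0}"
  have Ksub: "csubspace K" unfolding K_def csubspace_def using hom by (auto simp: add zero)
  have Kcl: "closed K" unfolding K_def
    by (intro closed_Collect_eq continuous_on_const linear_continuous_on lin)
  define w0 where "w0 = w - oproj K w"
  have "\<phi> (oproj K w) = 0" using oproj(1)[OF Ksub Kcl] by (simp add: K_def)
  then have pw0: "\<phi> w0 \<noteq> 0" using w by (simp add: w0_def diff)
  then have w00: "w0 \<noteq> 0" using zero by auto
  have orth: "cinner v w0 = 0" if "v \<in> K" for v
    using oproj(2)[OF Ksub Kcl that] by (simp add: w0_def)
  define z where "z = cscale (cnj (\<phi> w0 / cinner w0 w0)) w0"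
  have "\<phi> x = cinner z x" for x
  proof -
    define y where "y = x - cscale (\<phi> x / \<phi> w0) w0"
    have "\<phi> y = 0" using pw0 by (simp add: y_def diff hom)
    then have "cinner y w0 = 0" by (intro orth) (simp add: K_def)
    then have "cinner w0 y = 0" by (subst cinner_conj) simp
    then have "cinner w0 x = \<phi> x / \<phi> w0 * cinner w0 w0"
      by (simp add: y_def cinner_diff_right cinner_cscale_right)
    then show ?thesis using w00 pw0 by (simp add: z_def cinner_cscale_left field_simps)
  qed
  then show ?thesis by blast
qed

lemma bounded_op_id: "bounded_op id"
  by (simp add: bounded_op_def bounded_linear_ident[unfolded id_def[symmetric]])

lemma bounded_op_comp: "bounded_op S \<Longrightarrow> bounded_op T \<Longrightarrow> bounded_op (S \<circ> T)"
  unfolding bounded_op_def by (auto intro: bounded_linear_compose simp: o_def)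

lemma bounded_op_linear:
  assumes "bounded_op T"
  shows "T (x + y) = T x + T y" "T (x - y) = T x - T y" "T 0 = 0" "T (- x) = - T x"
    "T (cscale a x) = cscale a (T x)" "T (r *\<^sub>R x) = r *\<^sub>R T x"
  using assms unfolding bounded_op_def
  by (auto simp: linear_simps)

lemma adj_exists:
  assumes T: "bounded_op T"
  shows "\<exists>S. \<forall>x y. cinner (T x) y = cinner x (S y)"
proof -
  have "\<exists>z. \<forall>x. cinner (T x) y = cinner x z" for y
  proof -
    have bl: "bounded_linear (\<lambda>x. cinner y (T x))"
      using T unfolding bounded_op_def
      by (auto intro: bounded_linear_compose[OF bounded_linear_cinner_right])
    have "\<exists>z. \<forall>x. cinner y (T x) = cinner z x"
      by (rule riesz[OF bl]) (use T in \<open>simp add: bounded_op_linear cinner_cscale_right\<close>)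
    then obtain z where z: "\<And>x. cinner y (T x) = cinner z x" by blast
    have "cinner (T x) y = cinner x z" for x
      by (metis cinner_conj z)
    then show ?thesis by blast
  qed
  then show ?thesis by metis
qed

lemma adj_unique:
  assumes "\<And>x y. cinner (T x) y = cinner x (S y)"
  shows "adj T = S"
  unfolding adj_def
proof (rule the_equality)
  show "\<forall>x y. cinner (T x) y = cinner x (S y)" using assms by blast
  fix S' assume "\<forall>x y. cinner (T x) y = cinner x (S' y)"
  then show "S' = S" using assms by (intro ext cinner_ext) metis
qed

lemma adj_char:
  assumes "bounded_op T"
  shows "cinner (T x) y = cinner x (adj T y)"
proof -
  obtain S where S: "\<forall>x y. cinner (T x) y = cinner x (S y)" using adj_exists[OF assms] by blast
  then have "adj T = S" by (intro adj_unique) blast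
  then show ?thesis using S by simp
qed

lemma adj_char': "bounded_op T \<Longrightarrow> cinner (adj T x) y = cinner x (T y)"
  by (metis adj_char cinner_conj)

lemma adj_bounded_op:
  assumes T: "bounded_op T"
  shows "bounded_op (adj T)"
proof -
  let ?S = "adj T"
  have add: "?S (x + y) = ?S x + ?S y" for x y
    by (rule cinner_ext) (simp add: adj_char[OF T, symmetric] cinner_add_right)
  have sc: "?S (cscale a x) = cscale a (?S x)" for a x
    by (rule cinner_ext) (simp add: adj_char[OF T, symmetric] cinner_cscale_right)
  have scR: "?S (r *\<^sub>R x) = r *\<^sub>R ?S x" for r x
    by (metis sc cscale_of_real)
  obtain K where K: "\<And>x. norm (T x) \<le> norm x * K" "K > 0"
    using T unfolding bounded_op_def using bounded_linear.pos_bounded by blast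
  have bd: "norm (?S y) \<le> norm y * K" for y
  proof (cases "?S y = 0")
    case True then show ?thesis using K by simp
  next
    case False
    have "(norm (?S y))\<^sup>2 = Re (cinner (?S y) (?S y))" by (simp add: cinner_self)
    also have "\<dots> = Re (cinner (T (?S y)) y)" by (simp add: adj_char[OF T])
    also have "\<dots> \<le> norm (T (?S y)) * norm y" by (rule Re_cinner_le)
    also have "\<dots> \<le> norm (?S y) * K * norm y" using K by (simp add: mult_right_mono)
    finally have "norm (?S y) * norm (?S y) \<le> norm (?S y) * (norm y * K)"
      by (simp add: power2_eq_square mult_ac)
    then show ?thesis using False by simp
  qed
  show ?thesis unfolding bounded_op_def
    using sc by (auto intro!: bounded_linear_intro[where K=K] add scR bd)
qed

lemma adj_adj: "bounded_op T \<Longrightarrow> adj (adj T) = T"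
  by (rule adj_unique) (metis adj_char cinner_conj)

lemma adj_comp: "bounded_op S \<Longrightarrow> bounded_op T \<Longrightarrow> adj (S \<circ> T) = adj T \<circ> adj S"
  by (rule adj_unique) (simp add: adj_char)

lemma adj_id: "adj id = id"
  by (rule adj_unique) simp

lemma adj_self: "(\<And>x y. cinner (T x) y = cinner x (T y)) \<Longrightarrow> adj T = T"
  by (rule adj_unique)



section \<open>Positive operators\<close>

definition sa :: "('h::chilbert \<Rightarrow> 'h) \<Rightarrow> bool" where
  "sa T \<longleftrightarrow> (\<forall>x y. cinner (T x) y = cinner x (T y))"

lemma positive_sa:
  assumes a: "bounded_op a" and p: "positive_op a"
  shows "sa a"
  unfolding sa_def
proof (intro allI)
  fix x y
  define A where "A = cinner x (a y)"
  define B where "B = cinner y (a x)"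
  have q: "Im (cinner h (a h)) = 0" for h using p by (simp add: positive_op_def)
  have e1: "cinner (x + y) (a (x + y)) = cinner x (a x) + cinner y (a y) + A + B"
    using a by (simp add: bounded_op_linear cinner_add_left cinner_add_right A_def B_def)
  have e2: "cinner (x + cscale \<i> y) (a (x + cscale \<i> y)) = cinner x (a x) + cinner y (a y) + \<i> * A - \<i> * B"
    using a by (simp add: bounded_op_linear cinner_add_left cinner_add_right cinner_cscale_left
        cinner_cscale_right A_def B_def algebra_simps)
  have "Im (A + B) = 0" using e1 q[of "x+y"] q[of x] q[of y] by simp
  moreover have "Re (A - B) = 0" using e2 q[of "x + cscale \<i> y"] q[of x] q[of y] by simp
  ultimately have "A = cnj B" by (simp add: complex_eq_iff)
  then show "cinner (a x) y = cinner x (a y)" by (subst cinner_conj) (simp add: A_def B_def)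
qed

lemma quad_CS:
  fixes A B C :: real
  assumes "\<And>s. 0 \<le> A - 2 * s * B + s\<^sup>2 * C" "0 \<le> C"
  shows "B\<^sup>2 \<le> A * C"
proof (cases "C = 0")
  case True
  have "B = 0"
  proof (rule ccontr)
    assume "B \<noteq> 0"
    have "0 \<le> A - 2 * ((A + 1) / (2 * B)) * B + ((A + 1) / (2 * B))\<^sup>2 * C" by (rule assms)
    then show False using True \<open>B \<noteq> 0\<close> by (simp add: field_simps)
  qed
  then show ?thesis using True by simp
next
  case False
  then have C: "C > 0" using assms(2) by simp
  have "0 \<le> A - 2 * (B / C) * B + (B / C)\<^sup>2 * C" by (rule assms)
  also have "\<dots> = (A * C - B\<^sup>2) / C" using C by (simp add: field_simps power2_eq_square)
  finally show ?thesis using C by (simp add: zero_le_divide_iff)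
qed

lemma pos_CS:
  assumes a: "bounded_op a" and p: "positive_op a"
  shows "(cmod (cinner x (a y)))\<^sup>2 \<le> Re (cinner x (a x)) * Re (cinner y (a y))"
proof (cases "cinner x (a y) = 0")
  case True
  then show ?thesis using p by (simp add: positive_op_def)
next
  case False
  have s: "sa a" by (rule positive_sa[OF a p])
  define w where "w = cinner x (a y)"
  define u where "u = cnj w / of_real (cmod w)"
  have u1: "cnj u * u = 1" using False
    by (simp add: u_def w_def divide_simps complex_norm_square[symmetric] power2_eq_square)
  define y' where "y' = cscale u y"
  have w0: "w \<noteq> 0" using False by (simp add: w_def)
  have wc: "w * cnj w = of_real (cmod w) * of_real (cmod w)"
    using complex_norm_square[of w] by (simp add: power2_eq_square)
  have "cinner x (a y') = u * w" using a by (simp add: y'_def bounded_op_linear cinner_cscale_right w_def)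
  also have "u * w = of_real (cmod w)" using w0 wc by (simp add: u_def field_simps)
  finally have wy': "cinner x (a y') = of_real (cmod w)" .
  have yx': "cinner y' (a x) = of_real (cmod w)"
    using wy' s unfolding sa_def by (metis cinner_conj complex_cnj_complex_of_real)
  have qy': "cinner y' (a y') = cinner y (a y)"
    using a by (simp add: y'_def bounded_op_linear cinner_cscale_right cinner_cscale_left mult.assoc[symmetric] u1
        mult.commute[of u "cnj u"])
  show ?thesis
  proof -
    have "(cmod w)\<^sup>2 \<le> Re (cinner x (a x)) * Re (cinner y (a y))"
    proof (rule quad_CS)
      fix s :: real
      have "0 \<le> Re (cinner (x - s *\<^sub>R y') (a (x - s *\<^sub>R y')))"
        using p by (simp add: positive_op_def)
      also have "cinner (x - s *\<^sub>R y') (a (x - s *\<^sub>R y')) =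
          cinner x (a x) - of_real s * cinner x (a y') - of_real s * cinner y' (a x)
          + of_real s * of_real s * cinner y' (a y')"
        using a by (simp add: bounded_op_linear cinner_diff_left cinner_diff_right
            cinner_scaleR_left cinner_scaleR_right algebra_simps)
      finally show "0 \<le> Re (cinner x (a x)) - 2 * s * cmod w + s\<^sup>2 * Re (cinner y (a y))"
        using wy' yx' qy' by (simp add: power2_eq_square)
    next
      show "0 \<le> Re (cinner y (a y))" using p by (simp add: positive_op_def)
    qed
    then show ?thesis by (simp add: w_def)
  qed
qed

lemma pos_zero:
  assumes a: "bounded_op a" and p: "positive_op a" and h: "cinner h (a h) = 0"
  shows "a h = 0"
proof -
  have "(cmod (cinner (a h) (a h)))\<^sup>2 \<le> Re (cinner (a h) (a (a h))) * Re (cinner h (a h))"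
    by (rule pos_CS[OF a p])
  then have "(cmod (cinner (a h) (a h)))\<^sup>2 \<le> 0" using h by simp
  then show ?thesis by simp
qed

lemma pos_bound:
  assumes a: "bounded_op a" and p: "positive_op a"
    and r: "\<And>h. Re (cinner h (a h)) \<le> r * (norm h)\<^sup>2"
  shows "norm (a h) \<le> r * norm h"
proof (cases "a h = 0")
  case True
  have "0 \<le> r * (norm h)\<^sup>2 \<or> h = 0" using r[of h] p by (auto simp: positive_op_def intro: order_trans)
  moreover have "h \<noteq> 0 \<Longrightarrow> 0 \<le> r" using \<open>_ \<or> _\<close> by (simp add: zero_le_mult_iff)
  ultimately show ?thesis using True by (cases "h = 0") auto
next
  case False
  have r0: "0 \<le> r"
  proof -
    have "0 \<le> Re (cinner (a h) (a (a h)))" using p by (simp add: positive_op_def)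
    also have "\<dots> \<le> r * (norm (a h))\<^sup>2" by (rule r)
    finally show ?thesis using False by (simp add: zero_le_mult_iff)
  qed
  have "(cmod (cinner (a h) (a h)))\<^sup>2 \<le> Re (cinner (a h) (a (a h))) * Re (cinner h (a h))"
    by (rule pos_CS[OF a p])
  also have "\<dots> \<le> (r * (norm (a h))\<^sup>2) * (r * (norm h)\<^sup>2)"
    using p r r0 by (intro mult_mono) (auto simp: positive_op_def)
  finally have "(norm (a h))\<^sup>2 * (norm (a h))\<^sup>2 \<le> (norm (a h))\<^sup>2 * (r * norm h)\<^sup>2"
    by (simp add: cinner_self power2_eq_square mult_ac norm_mult)
  then have "(norm (a h))\<^sup>2 \<le> (r * norm h)\<^sup>2" by (rule mult_left_le_imp_le) (use False in simp)
  then show ?thesis using r0 by (simp add: power2_le_iff_abs_le)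
qed



section \<open>Series of operators\<close>

lemma blinfun_compose_sum_sum:
  fixes f g :: "'i \<Rightarrow> ('a::real_normed_vector \<Rightarrow>\<^sub>L 'a)"
  shows "(\<Sum>i\<in>A. f i) o\<^sub>L (\<Sum>j\<in>B. g j) = (\<Sum>(i,j)\<in>A \<times> B. f i o\<^sub>L g j)"
  by (subst bounded_bilinear.sum_left[OF bounded_bilinear_blinfun_compose])
    (simp add: bounded_bilinear.sum_right[OF bounded_bilinear_blinfun_compose] sum.cartesian_product)

lemma blinfun_Cauchy_product_sums:
  fixes a b :: "nat \<Rightarrow> ('a::banach \<Rightarrow>\<^sub>L 'a)"
  assumes a: "summable (\<lambda>k. norm (a k))"
    and b: "summable (\<lambda>k. norm (b k))"
  shows "(\<lambda>k. \<Sum>i\<le>k. a i o\<^sub>L b (k - i)) sums ((\<Sum>k. a k) o\<^sub>L (\<Sum>k. b k))"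
proof -
  let ?S1 = "\<lambda>n::nat. {..<n} \<times> {..<n}"
  let ?S2 = "\<lambda>n::nat. {(i,j). i + j < n}"
  have S1_mono: "\<And>m n. m \<le> n \<Longrightarrow> ?S1 m \<subseteq> ?S1 n" by auto
  have S2_le_S1: "\<And>n. ?S2 n \<subseteq> ?S1 n" by auto
  have S1_le_S2: "\<And>n. ?S1 (n div 2) \<subseteq> ?S2 n" by auto
  have finite_S1: "\<And>n. finite (?S1 n)" by simp
  with S2_le_S1 have finite_S2: "\<And>n. finite (?S2 n)" by (rule finite_subset)

  let ?g = "\<lambda>(i,j). a i o\<^sub>L b j"
  let ?f = "\<lambda>(i,j). norm (a i) * norm (b j)"
  have f_nonneg: "\<And>x. 0 \<le> ?f x" by auto
  then have norm_sum_f: "\<And>A. norm (sum ?f A) = sum ?f A"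
    unfolding real_norm_def
    by (simp only: abs_of_nonneg sum_nonneg [rule_format])

  have "(\<lambda>n. (\<Sum>k<n. a k) o\<^sub>L (\<Sum>k<n. b k)) \<longlonglongrightarrow> ((\<Sum>k. a k) o\<^sub>L (\<Sum>k. b k))"
    by (intro bounded_bilinear.tendsto[OF bounded_bilinear_blinfun_compose]
        summable_LIMSEQ summable_norm_cancel [OF a] summable_norm_cancel [OF b])
  then have 1: "(\<lambda>n. sum ?g (?S1 n)) \<longlonglongrightarrow> ((\<Sum>k. a k) o\<^sub>L (\<Sum>k. b k))"
    by (simp only: blinfun_compose_sum_sum)

  have "(\<lambda>n. (\<Sum>k<n. norm (a k)) * (\<Sum>k<n. norm (b k))) \<longlonglongrightarrow> (\<Sum>k. norm (a k)) * (\<Sum>k. norm (b k))"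
    using a b by (intro tendsto_mult summable_LIMSEQ)
  then have "(\<lambda>n. sum ?f (?S1 n)) \<longlonglongrightarrow> (\<Sum>k. norm (a k)) * (\<Sum>k. norm (b k))"
    by (simp only: sum_product sum.Sigma [rule_format] finite_lessThan)
  then have "convergent (\<lambda>n. sum ?f (?S1 n))"
    by (rule convergentI)
  then have Cauchy: "Cauchy (\<lambda>n. sum ?f (?S1 n))"
    by (rule convergent_Cauchy)
  have "Zfun (\<lambda>n. sum ?f (?S1 n - ?S2 n)) sequentially"
  proof (rule ZfunI, simp only: eventually_sequentially norm_sum_f)
    fix r :: real
    assume r: "0 < r"
    from CauchyD [OF Cauchy r] obtain N
      where "\<forall>m\<ge>N. \<forall>n\<ge>N. norm (sum ?f (?S1 m) - sum ?f (?S1 n)) < r" ..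
    then have "\<And>m n. N \<le> n \<Longrightarrow> n \<le> m \<Longrightarrow> norm (sum ?f (?S1 m - ?S1 n)) < r"
      by (simp only: sum_diff finite_S1 S1_mono)
    then have N: "\<And>m n. N \<le> n \<Longrightarrow> n \<le> m \<Longrightarrow> sum ?f (?S1 m - ?S1 n) < r"
      by (simp only: norm_sum_f)
    show "\<exists>N. \<forall>n\<ge>N. sum ?f (?S1 n - ?S2 n) < r"
    proof (intro exI allI impI)
      fix n
      assume "2 * N \<le> n"
      then have n: "N \<le> n div 2" by simp
      have "sum ?f (?S1 n - ?S2 n) \<le> sum ?f (?S1 n - ?S1 (n div 2))"
        by (intro sum_mono2 finite_Diff finite_S1 f_nonneg Diff_mono subset_refl S1_le_S2)
      also have "\<dots> < r"
        using n div_le_dividend by (rule N)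
      finally show "sum ?f (?S1 n - ?S2 n) < r" .
    qed
  qed
  then have "Zfun (\<lambda>n. sum ?g (?S1 n - ?S2 n)) sequentially"
    apply (rule Zfun_le [rule_format])
    apply (simp only: norm_sum_f)
    apply (rule order_trans [OF norm_sum sum_mono])
    apply (auto simp add: norm_blinfun_compose)
    done
  then have 2: "(\<lambda>n. sum ?g (?S1 n) - sum ?g (?S2 n)) \<longlonglongrightarrow> 0"
    unfolding tendsto_Zfun_iff diff_0_right
    by (simp only: sum_diff finite_S1 S2_le_S1)
  with 1 have "(\<lambda>n. sum ?g (?S2 n)) \<longlonglongrightarrow> ((\<Sum>k. a k) o\<^sub>L (\<Sum>k. b k))"
    by (rule Lim_transform2)
  then show ?thesis
    by (simp only: sums_def sum.triangle_reindex)
qed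

fun bpow :: "('a::real_normed_vector \<Rightarrow>\<^sub>L 'a) \<Rightarrow> nat \<Rightarrow> ('a \<Rightarrow>\<^sub>L 'a)" where
  "bpow B 0 = id_blinfun"
| "bpow B (Suc n) = B o\<^sub>L bpow B n"

lemma norm_bpow: "norm (bpow B n) \<le> (norm B) ^ n"
proof (induction n)
  case 0 then show ?case using norm_blinfun_id_le by simp
next
  case (Suc n)
  have "norm (bpow B (Suc n)) \<le> norm B * norm (bpow B n)" by (simp add: norm_blinfun_compose)
  also have "\<dots> \<le> norm B * norm B ^ n" using Suc by (simp add: mult_left_mono)
  finally show ?case by simp
qed

lemma bpow_apply_add: "blinfun_apply (bpow B i) (blinfun_apply (bpow B j) x) = blinfun_apply (bpow B (i + j)) x"
  by (induction i) auto

lemma bpow_add: "bpow B i o\<^sub>L bpow B j = bpow B (i + j)"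
  by (rule blinfun_eqI) (simp add: bpow_apply_add)

lemma bpow_commute:
  assumes "bounded_linear L" "\<And>h. L (blinfun_apply B h) = blinfun_apply B (L h)"
  shows "L (blinfun_apply (bpow B n) h) = blinfun_apply (bpow B n) (L h)"
  by (induction n arbitrary: h) (auto simp: assms)

definition psum :: "(nat \<Rightarrow> real) \<Rightarrow> ('a::real_normed_vector \<Rightarrow>\<^sub>L 'a) \<Rightarrow> ('a \<Rightarrow>\<^sub>L 'a)" where
  "psum c B = (\<Sum>n. c n *\<^sub>R bpow B n)"

definition pconv :: "(nat \<Rightarrow> real) \<Rightarrow> (nat \<Rightarrow> real) \<Rightarrow> nat \<Rightarrow> real" where
  "pconv c d k = (\<Sum>i\<le>k. c i * d (k - i))"

lemma psum_summable_norm: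
  assumes "summable (\<lambda>n. \<bar>c n\<bar> * norm B ^ n)"
  shows "summable (\<lambda>n. norm (c n *\<^sub>R bpow B n))"
  by (rule summable_comparison_test[OF _ assms])
    (auto intro!: exI[of _ 0] mult_left_mono norm_bpow)

lemma psum_apply:
  fixes B :: "'a::banach \<Rightarrow>\<^sub>L 'a"
  assumes "summable (\<lambda>n. \<bar>c n\<bar> * norm B ^ n)"
  shows "blinfun_apply (psum c B) h = (\<Sum>n. c n *\<^sub>R blinfun_apply (bpow B n) h)"
    "summable (\<lambda>n. c n *\<^sub>R blinfun_apply (bpow B n) h)"
proof -
  have s: "summable (\<lambda>n. c n *\<^sub>R bpow B n)"
    using summable_norm_cancel[OF psum_summable_norm[OF assms]] .
  have bl: "bounded_linear (\<lambda>F::'a \<Rightarrow>\<^sub>L 'a. blinfun_apply F h)"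
    by (rule bounded_bilinear.bounded_linear_left[OF bounded_bilinear_blinfun_apply])
  show "blinfun_apply (psum c B) h = (\<Sum>n. c n *\<^sub>R blinfun_apply (bpow B n) h)"
    unfolding psum_def using bounded_linear.suminf[OF bl s] by (simp add: blinfun.scaleR_left)
  show "summable (\<lambda>n. c n *\<^sub>R blinfun_apply (bpow B n) h)"
    using bounded_linear.summable[OF bl s] by (simp add: blinfun.scaleR_left)
qed

lemma psum_mult:
  fixes B :: "'a::banach \<Rightarrow>\<^sub>L 'a"
  assumes c: "summable (\<lambda>n. \<bar>c n\<bar> * norm B ^ n)" and d: "summable (\<lambda>n. \<bar>d n\<bar> * norm B ^ n)"
  shows "(\<lambda>k. pconv c d k *\<^sub>R bpow B k) sums (psum c B o\<^sub>L psum d B)"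
proof -
  have "(\<lambda>k. \<Sum>i\<le>k. (c i *\<^sub>R bpow B i) o\<^sub>L (d (k - i) *\<^sub>R bpow B (k - i))) sums (psum c B o\<^sub>L psum d B)"
    unfolding psum_def
    by (rule blinfun_Cauchy_product_sums[OF psum_summable_norm[OF c] psum_summable_norm[OF d]])
  moreover have "(\<Sum>i\<le>k. (c i *\<^sub>R bpow B i) o\<^sub>L (d (k - i) *\<^sub>R bpow B (k - i))) = pconv c d k *\<^sub>R bpow B k" for k
  proof -
    have "(c i *\<^sub>R bpow B i) o\<^sub>L (d (k - i) *\<^sub>R bpow B (k - i)) = (c i * d (k - i)) *\<^sub>R bpow B k"
      if "i \<le> k" for i
      using that bpow_add[of B i "k - i"]
      by (simp add: bounded_bilinear.scaleR_left[OF bounded_bilinear_blinfun_compose]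
          bounded_bilinear.scaleR_right[OF bounded_bilinear_blinfun_compose])
    then show ?thesis unfolding pconv_def scaleR_sum_left by (intro sum.cong) auto
  qed
  ultimately show ?thesis by simp
qed

lemma psum_finite:
  fixes B :: "'a::banach \<Rightarrow>\<^sub>L 'a"
  assumes "\<And>n. n \<ge> 2 \<Longrightarrow> c n = 0"
  shows "(\<lambda>k. c k *\<^sub>R bpow B k) sums (c 0 *\<^sub>R id_blinfun + c 1 *\<^sub>R B)"
proof -
  have "(\<lambda>k. c k *\<^sub>R bpow B k) sums (\<Sum>k\<in>{0,1}. c k *\<^sub>R bpow B k)"
    by (rule sums_finite) (use assms in \<open>auto simp: not_less_eq_eq\<close>)
  moreover have "B o\<^sub>L id_blinfun = B" by (rule blinfun_eqI) simp
  ultimately show ?thesis by simp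
qed

lemma psum_commute:
  fixes B :: "'a::banach \<Rightarrow>\<^sub>L 'a"
  assumes c: "summable (\<lambda>n. \<bar>c n\<bar> * norm B ^ n)"
    and L: "bounded_linear L" "\<And>h. L (blinfun_apply B h) = blinfun_apply B (L h)"
  shows "L (blinfun_apply (psum c B) h) = blinfun_apply (psum c B) (L h)"
proof -
  have "L (blinfun_apply (psum c B) h) = (\<Sum>n. L (c n *\<^sub>R blinfun_apply (bpow B n) h))"
    unfolding psum_apply(1)[OF c] by (rule bounded_linear.suminf[OF L(1) psum_apply(2)[OF c]])
  also have "\<dots> = (\<Sum>n. c n *\<^sub>R blinfun_apply (bpow B n) (L h))"
    by (simp add: linear_scale[OF bounded_linear.linear[OF L(1)]] bpow_commute[OF L])
  also have "\<dots> = blinfun_apply (psum c B) (L h)" by (simp add: psum_apply(1)[OF c])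
  finally show ?thesis .
qed



section \<open>Square root coefficients\<close>

definition scoef :: "nat \<Rightarrow> real" where
  "scoef n = (-1)^n * ((1/2) gchoose n)"

lemma scoef_0[simp]: "scoef 0 = 1" by (simp add: scoef_def)

lemma scoef_Suc: "scoef (Suc n) = scoef n * (real n - 1/2) / (real n + 1)"
proof -
  define g where "g = ((1/2::real) gchoose n)"
  define g' where "g' = ((1/2::real) gchoose (Suc n))"
  have nz: "real n + 1 \<noteq> 0" by (simp add: add_nonneg_eq_0_iff)
  have E: "(1/2) * g = real n * g + (real n + 1) * g'"
    using gbinomial_mult_1[of "1/2::real" n] by (simp add: g_def g'_def algebra_simps)
  then have "(real n + 1) * g' = (1/2 - real n) * g" by (simp add: algebra_simps)
  then have g'eq: "g' = (1/2 - real n) * g / (real n + 1)" using nz by (simp add: field_simps)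
  have "scoef (Suc n) = - ((-1)^n * g')" by (simp add: scoef_def g'_def)
  also have "\<dots> = - ((-1)^n * ((1/2 - real n) * g / (real n + 1)))" using g'eq by simp
  also have "\<dots> = ((-1)^n * g) * (real n - 1/2) / (real n + 1)" using nz by (simp add: field_simps)
  also have "(-1)^n * g = scoef n" by (simp add: scoef_def g_def)
  finally show ?thesis .
qed

lemma scoef_conv: "pconv scoef scoef k = (if k = 0 then 1 else if k = 1 then -1 else 0)"
proof -
  have pt: "scoef i * scoef (k - i) = (-1)^k * (((1/2::real) gchoose i) * ((1/2) gchoose (k - i)))"
    if "i \<le> k" for i
  proof -
    have "(-1::real)^i * (-1)^(k-i) = (-1)^k" using that by (simp add: power_add[symmetric])
    then show ?thesis unfolding scoef_def by (metis (no_types, lifting) mult.assoc mult.left_commute)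
  qed
  have "pconv scoef scoef k = (\<Sum>i\<le>k. (-1)^k * (((1/2::real) gchoose i) * ((1/2) gchoose (k - i))))"
    unfolding pconv_def by (rule sum.cong[OF refl]) (simp add: pt)
  also have "\<dots> = (-1)^k * ((1::real) gchoose k)"
    using gbinomial_Vandermonde[of "1/2::real" "1/2" k]
    by (simp add: sum_distrib_left[symmetric] atLeast0AtMost)
  also have "\<dots> = (if k = 0 then 1 else if k = 1 then -1 else 0)"
  proof -
    have "(1::real) gchoose k = of_nat (1 choose k)" by (simp add: binomial_gbinomial)
    then show ?thesis by (cases k) (auto simp: binomial_eq_0)
  qed
  finally show ?thesis .
qed

lemma scoef_partial:
  "0 < (\<Sum>n\<le>N. scoef n) \<and> scoef (Suc N) = - (\<Sum>n\<le>N. scoef n) / (2 * (real N + 1))"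
proof (induction N)
  case 0 then show ?case by (simp add: scoef_Suc)
next
  case (Suc N)
  let ?P = "\<Sum>n\<le>N. scoef n"
  let ?s = "scoef (Suc N)"
  have nz: "real N + 1 \<noteq> 0" "real N + 2 \<noteq> 0" by (simp_all add: add_nonneg_eq_0_iff)
  have s1: "?P = - 2 * (real N + 1) * ?s" using Suc nz by (simp add: field_simps)
  have "0 < ?P / (2 * (real N + 1))" using Suc by (intro divide_pos_pos) auto
  then have sneg: "?s < 0" using Suc by simp
  have sumS: "(\<Sum>n\<le>Suc N. scoef n) = - (2 * real N + 1) * ?s" using s1 by (simp add: algebra_simps)
  have s2: "scoef (Suc (Suc N)) = ?s * (real N + 1/2) / (real N + 2)"
    using scoef_Suc[of "Suc N"] by (simp add: algebra_simps)
  have "0 < (\<Sum>n\<le>Suc N. scoef n)" unfolding sumS using sneg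
    by (intro mult_neg_neg) auto
  moreover have "scoef (Suc (Suc N)) = - (\<Sum>n\<le>Suc N. scoef n) / (2 * (real (Suc N) + 1))"
    unfolding sumS s2 using nz by (simp add: field_simps)
  ultimately show ?case by blast
qed

lemma scoef_neg: "scoef (Suc n) \<le> 0"
  using scoef_partial[of n] by (simp add: divide_nonneg_pos)

lemma scoef_abs_partial: "(\<Sum>n\<le>N. \<bar>scoef n\<bar>) = 2 - (\<Sum>n\<le>N. scoef n)"
proof (induction N)
  case 0 then show ?case by simp
next
  case (Suc N) then show ?case using scoef_neg[of N] by simp
qed

lemma scoef_summable: "summable (\<lambda>n. \<bar>scoef n\<bar>)"
proof (rule summableI_nonneg_bounded[where x=2])
  fix n
  show "(\<Sum>i<n. \<bar>scoef i\<bar>) \<le> 2"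
  proof (cases n)
    case 0 then show ?thesis by simp
  next
    case (Suc N)
    then have "{..<n} = {..N}" by auto
    then show ?thesis using scoef_abs_partial[of N] scoef_partial[of N] by simp
  qed
qed simp

lemma scoef_summable': "summable scoef"
  using summable_rabs_cancel[OF scoef_summable] .

lemma scoef_suminf_nonneg: "0 \<le> suminf scoef"
proof -
  have "(\<lambda>n. \<Sum>i<n. scoef i) \<longlonglongrightarrow> suminf scoef"
    using summable_LIMSEQ[OF scoef_summable'] .
  moreover have "\<forall>n\<ge>1. 0 \<le> (\<Sum>i<n. scoef i)"
  proof (intro allI impI)
    fix n :: nat assume "1 \<le> n"
    then obtain N where "n = Suc N" by (cases n) auto
    then have "{..<n} = {..N}" by auto
    then show "0 \<le> (\<Sum>i<n. scoef i)" using scoef_partial[of N] by simp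
  qed
  ultimately show ?thesis by (intro LIMSEQ_le_const) auto
qed

section \<open>Square roots and inverses\<close>

lemma bpow_B_comm: "blinfun_apply (bpow B n) (blinfun_apply B y) = blinfun_apply B (blinfun_apply (bpow B n) y)"
  using bpow_apply_add[of B n 1 y] by simp

lemma bpow_sa:
  assumes B: "bounded_op B" "sa B"
  shows "cinner (blinfun_apply (bpow (Blinfun B) n) x) y = cinner x (blinfun_apply (bpow (Blinfun B) n) y)"
proof (induction n arbitrary: x y)
  case 0 then show ?case by simp
next
  case (Suc n)
  have bl: "blinfun_apply (Blinfun B) = B" using B(1) by (simp add: bounded_op_def bounded_linear_Blinfun_apply)
  have cm: "blinfun_apply (bpow (Blinfun B) n) (B y) = B (blinfun_apply (bpow (Blinfun B) n) y)" for y
    using bpow_B_comm[of "Blinfun B" n y] by (simp add: bl)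
  show ?case using Suc B(2) by (simp add: bl sa_def cm)
qed

lemma blinfun_norm_le1:
  assumes B: "bounded_op B" "positive_op B" and le1: "\<And>h. Re (cinner h (B h)) \<le> r * (norm h)\<^sup>2"
    and r: "0 \<le> r"
  shows "norm (Blinfun B) \<le> r"
proof -
  have bl: "blinfun_apply (Blinfun B) = B" using B(1) by (simp add: bounded_op_def bounded_linear_Blinfun_apply)
  show ?thesis by (rule norm_blinfun_bound[OF r]) (simp add: bl pos_bound[OF B le1])
qed

lemma op_sqrt:
  fixes B :: "'h::chilbert \<Rightarrow> 'h"
  assumes B: "bounded_op B" "positive_op B" and le1: "\<And>h. Re (cinner h (B h)) \<le> (norm h)\<^sup>2"
  shows "\<exists>S. bounded_op S \<and> positive_op S \<and> (\<forall>h. S (S h) = h - B h) \<and>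
     (\<forall>L. bounded_linear L \<longrightarrow> (\<forall>h. L (B h) = B (L h)) \<longrightarrow> (\<forall>h. L (S h) = S (L h)))"
proof -
  define Bl where "Bl = Blinfun B"
  have bl: "blinfun_apply Bl = B" using B(1) by (simp add: Bl_def bounded_op_def bounded_linear_Blinfun_apply)
  have nB: "norm Bl \<le> 1" unfolding Bl_def by (rule blinfun_norm_le1[OF B]) (use le1 in auto)
  have cs: "summable (\<lambda>n. \<bar>scoef n\<bar> * norm Bl ^ n)"
    by (rule summable_comparison_test[OF _ scoef_summable])
      (auto intro!: exI[of _ 0] mult_left_le simp: power_le_one nB abs_mult)
  define S where "S = blinfun_apply (psum scoef Bl)"
  have comm: "L (S h) = S (L h)" if "bounded_linear L" "\<And>h. L (B h) = B (L h)" for L h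
    unfolding S_def by (rule psum_commute[OF cs that(1)]) (simp add: bl that(2))
  have bS: "bounded_op S"
    unfolding bounded_op_def
  proof
    show "bounded_linear S" unfolding S_def by (rule blinfun.bounded_linear_right)
    show "\<forall>a h. S (cscale a h) = cscale a (S h)"
      using comm[OF bounded_linear_cscale] B(1) by (simp add: bounded_op_linear)
  qed
  have sq: "S (S h) = h - B h" for h
  proof -
    have "(\<lambda>k. pconv scoef scoef k *\<^sub>R bpow Bl k) sums (psum scoef Bl o\<^sub>L psum scoef Bl)"
      by (rule psum_mult[OF cs cs])
    moreover have "(\<lambda>k. pconv scoef scoef k *\<^sub>R bpow Bl k) sums
        (pconv scoef scoef 0 *\<^sub>R id_blinfun + pconv scoef scoef 1 *\<^sub>R Bl)"
      by (rule psum_finite) (simp add: scoef_conv)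
    ultimately have "psum scoef Bl o\<^sub>L psum scoef Bl = id_blinfun - Bl"
      using sums_unique2 by (fastforce simp: scoef_conv)
    then have "blinfun_apply (psum scoef Bl o\<^sub>L psum scoef Bl) h = h - B h"
      by (simp add: bl blinfun.diff_left)
    then show ?thesis by (simp add: S_def)
  qed
  have pos: "positive_op S"
    unfolding positive_op_def
  proof
    fix h
    define X where "X n = scoef n *\<^sub>R blinfun_apply (bpow Bl n) h" for n
    have sX: "summable X" unfolding X_def by (rule psum_apply(2)[OF cs])
    have SX: "S h = suminf X" unfolding X_def S_def by (rule psum_apply(1)[OF cs])
    have ci: "cinner h (S h) = (\<Sum>n. cinner h (X n))"
      unfolding SX by (rule bounded_linear.suminf[OF bounded_linear_cinner_right sX])
    have sci: "summable (\<lambda>n. cinner h (X n))"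
      by (rule bounded_linear.summable[OF bounded_linear_cinner_right sX])
    have Xn: "cinner h (X n) = of_real (scoef n) * cinner h (blinfun_apply (bpow Bl n) h)" for n
      by (simp add: X_def cinner_scaleR_right)
    have real: "Im (cinner h (blinfun_apply (bpow Bl n) h)) = 0" for n
    proof -
      have "cinner h (blinfun_apply (bpow Bl n) h) = cinner (blinfun_apply (bpow Bl n) h) h"
        unfolding Bl_def by (rule bpow_sa[OF B(1) positive_sa[OF B], symmetric])
      then have "cinner h (blinfun_apply (bpow Bl n) h) = cnj (cinner h (blinfun_apply (bpow Bl n) h))"
        by (metis cinner_conj)
      then show ?thesis by (metis Im_complex_of_real Reals_cnj_iff complex_is_Real_iff)
    qed
    have Reb: "Re (cinner h (blinfun_apply (bpow Bl n) h)) \<le> (norm h)\<^sup>2" for n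
    proof -
      have "Re (cinner h (blinfun_apply (bpow Bl n) h)) \<le> norm h * norm (blinfun_apply (bpow Bl n) h)"
        by (rule Re_cinner_le)
      also have "norm (blinfun_apply (bpow Bl n) h) \<le> norm h"
      proof -
        have "norm (blinfun_apply (bpow Bl n) h) \<le> norm (bpow Bl n) * norm h" by (rule norm_blinfun)
        also have "norm (bpow Bl n) * norm h \<le> 1 * norm h"
        proof (rule mult_right_mono)
          show "norm (bpow Bl n) \<le> 1" using norm_bpow[of Bl n] nB
            by (meson norm_ge_zero order_trans power_le_one)
        qed simp
        finally show ?thesis by simp
      qed
      finally show ?thesis by (simp add: power2_eq_square mult_left_mono)
    qed
    have "Im (cinner h (S h)) = (\<Sum>n. Im (cinner h (X n)))"
      unfolding ci by (rule bounded_linear.suminf[OF bounded_linear_Im sci])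
    also have "\<dots> = 0" by (simp add: Xn real)
    finally show "Im (cinner h (S h)) = 0 \<and> 0 \<le> Re (cinner h (S h))"
    proof (intro conjI)
      have Re_eq: "Re (cinner h (S h)) = (\<Sum>n. Re (cinner h (X n)))"
        unfolding ci by (rule bounded_linear.suminf[OF bounded_linear_Re sci])
      have sR: "summable (\<lambda>n. Re (cinner h (X n)))"
        by (rule bounded_linear.summable[OF bounded_linear_Re sci])
      have "0 \<le> suminf scoef * (norm h)\<^sup>2" using scoef_suminf_nonneg by simp
      also have "\<dots> = (\<Sum>n. scoef n * (norm h)\<^sup>2)"
        by (rule suminf_mult2[OF scoef_summable'])
      also have "\<dots> \<le> (\<Sum>n. Re (cinner h (X n)))"
      proof (rule suminf_le)
        fix n
        show "scoef n * (norm h)\<^sup>2 \<le> Re (cinner h (X n))"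
        proof (cases n)
          case 0 then show ?thesis by (simp add: Xn cinner_self)
        next
          case (Suc m)
          have "scoef n \<le> 0" using scoef_neg Suc by simp
          then show ?thesis using Reb[of n] by (simp add: Xn mult_left_mono_neg)
        qed
      qed (use summable_mult2[OF scoef_summable'] sR in auto)
      finally show "0 \<le> Re (cinner h (S h))" using Re_eq by simp
    qed
  qed
  show ?thesis using bS pos sq comm by blast
qed

lemma op_inv:
  fixes G :: "'h::chilbert \<Rightarrow> 'h"
  assumes G: "bounded_op G" "positive_op G" and d: "0 < \<delta>"
    and lb: "\<And>h. \<delta> * (norm h)\<^sup>2 \<le> Re (cinner h (G h))"
  shows "\<exists>D. bounded_op D \<and> (\<forall>h. D (G h) = h) \<and> (\<forall>h. G (D h) = h)"
proof -
  obtain K where K: "\<And>x. norm (G x) \<le> norm x * K" "K > 0"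
    using G(1) unfolding bounded_op_def using bounded_linear.pos_bounded by blast
  define K1 where "K1 = K + \<delta>"
  have K1: "K1 > 0" using K d by (simp add: K1_def)
  define X where "X h = h - (1 / K1) *\<^sub>R G h" for h
  have bX: "bounded_op X"
    using G(1) unfolding bounded_op_def X_def
    by (auto intro!: bounded_linear_sub bounded_linear_ident bounded_linear_compose[OF bounded_linear_scaleR_right]
        simp: cscale_diff_right cscale_scaleR_comm)
  have Gup: "Re (cinner h (G h)) \<le> K * (norm h)\<^sup>2" for h
  proof -
    have "Re (cinner h (G h)) \<le> norm h * norm (G h)" by (rule Re_cinner_le)
    also have "\<dots> \<le> norm h * (norm h * K)" using K by (simp add: mult_left_mono)
    finally show ?thesis by (simp add: power2_eq_square mult_ac)
  qed
  have ReX: "Re (cinner h (X h)) = (norm h)\<^sup>2 - Re (cinner h (G h)) / K1" for h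
    by (simp add: X_def cinner_diff_right cinner_scaleR_right cinner_self)
  have pX: "positive_op X"
    unfolding positive_op_def
  proof
    fix h
    have "Im (cinner h (X h)) = - Im (cinner h (G h)) / K1"
      by (simp add: X_def cinner_diff_right cinner_scaleR_right cinner_self)
    also have "Im (cinner h (G h)) = 0" using G(2) by (simp add: positive_op_def)
    finally have "Im (cinner h (X h)) = 0" by simp
    moreover have "Re (cinner h (G h)) / K1 \<le> (norm h)\<^sup>2"
    proof -
      have "K * (norm h)\<^sup>2 \<le> K1 * (norm h)\<^sup>2" using d by (intro mult_right_mono) (auto simp: K1_def)
      then have "Re (cinner h (G h)) \<le> (norm h)\<^sup>2 * K1" using Gup[of h] by (simp add: mult.commute)
      then show ?thesis using K1 by (simp add: divide_le_eq)
    qed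
    ultimately show "Im (cinner h (X h)) = 0 \<and> 0 \<le> Re (cinner h (X h))" using ReX[of h] by simp
  qed
  define q where "q = 1 - \<delta> / K1"
  have q: "0 \<le> q" "q < 1" using d K(2) K1 by (auto simp: q_def K1_def field_simps)
  have Xup: "Re (cinner h (X h)) \<le> q * (norm h)\<^sup>2" for h
  proof -
    have "\<delta> * (norm h)\<^sup>2 / K1 \<le> Re (cinner h (G h)) / K1" using lb[of h] K1 by (simp add: divide_right_mono)
    then show ?thesis using ReX[of h] by (simp add: q_def field_simps)
  qed
  define Xl where "Xl = Blinfun X"
  have xl: "blinfun_apply Xl = X" using bX by (simp add: Xl_def bounded_op_def bounded_linear_Blinfun_apply)
  have nX: "norm Xl \<le> q" unfolding Xl_def by (rule blinfun_norm_le1[OF bX pX Xup q(1)])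
  define c :: "nat \<Rightarrow> real" where "c n = 1" for n
  define e :: "nat \<Rightarrow> real" where "e n = (if n = 0 then 1 else if n = 1 then -1 else 0)" for n
  have cs: "summable (\<lambda>n. \<bar>c n\<bar> * norm Xl ^ n)"
    using q nX by (simp add: c_def summable_geometric)
  have es: "summable (\<lambda>n. \<bar>e n\<bar> * norm Xl ^ n)"
    by (rule summable_finite[of "{0,1}"]) (auto simp: e_def)
  have econv: "pconv e c k = (if k = 0 then 1 else 0)" for k
  proof (cases k)
    case 0 then show ?thesis by (simp add: pconv_def e_def c_def)
  next
    case (Suc m)
    have "pconv e c k = (\<Sum>i\<in>{0,1}. e i)"
      unfolding pconv_def c_def mult_1_right by (rule sum.mono_neutral_right) (auto simp: Suc e_def)
    then show ?thesis using Suc by (simp add: e_def)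
  qed
  have "(\<lambda>k. pconv e c k *\<^sub>R bpow Xl k) sums (psum e Xl o\<^sub>L psum c Xl)"
    by (rule psum_mult[OF es cs])
  moreover have "(\<lambda>k. pconv e c k *\<^sub>R bpow Xl k) sums (pconv e c 0 *\<^sub>R id_blinfun + pconv e c 1 *\<^sub>R Xl)"
    by (rule psum_finite) (simp add: econv)
  ultimately have inv1: "psum e Xl o\<^sub>L psum c Xl = id_blinfun"
    using sums_unique2 by (fastforce simp: econv)
  have esum: "(\<lambda>k. e k *\<^sub>R bpow Xl k) sums (e 0 *\<^sub>R id_blinfun + e 1 *\<^sub>R Xl)"
    by (rule psum_finite) (simp add: e_def)
  have pe: "blinfun_apply (psum e Xl) h = h - X h" for h
  proof -
    have "psum e Xl = id_blinfun - Xl"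
      unfolding psum_def using sums_unique[OF esum] by (simp add: e_def)
    then show ?thesis by (simp add: xl blinfun.diff_left)
  qed
  define N where "N = blinfun_apply (psum c Xl)"
  have NX: "N h - X (N h) = h" for h
    using arg_cong[OF inv1, of "\<lambda>F. blinfun_apply F h"] by (simp add: N_def pe)
  have Ncomm: "L (N h) = N (L h)" if "bounded_linear L" "\<And>h. L (X h) = X (L h)" for L h
    unfolding N_def by (rule psum_commute[OF cs that(1)]) (simp add: xl that(2))
  have XN: "N (h - X h) = h" for h
  proof -
    have "N (h - X h) = N h - N (X h)" unfolding N_def by (simp add: blinfun.diff_right)
    also have "N (X h) = X (N h)" using Ncomm[OF _ ] bX
      by (metis (no_types, lifting) Ncomm bounded_op_def)
    finally show ?thesis using NX by simp
  qed
  define D where "D h = (1 / K1) *\<^sub>R N h" for h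
  have G_X: "G h = K1 *\<^sub>R (h - X h)" for h using K1 by (simp add: X_def)
  have bN: "bounded_linear N" unfolding N_def by (rule blinfun.bounded_linear_right)
  have bD: "bounded_op D"
    unfolding bounded_op_def
  proof
    show "bounded_linear D" unfolding D_def
      by (rule bounded_linear_compose[OF bounded_linear_scaleR_right bN])
    have "cscale a (N h) = N (cscale a h)" for a h
      by (rule Ncomm[OF bounded_linear_cscale]) (use bX in \<open>simp add: bounded_op_linear\<close>)
    then show "\<forall>a h. D (cscale a h) = cscale a (D h)" by (simp add: D_def cscale_scaleR_comm)
  qed
  have "D (G h) = h" for h
    using K1 by (simp add: D_def G_X linear_scale[OF bounded_linear.linear[OF bN]] XN)
  moreover have "G (D h) = h" for h
  proof -
    have "D h - X (D h) = (1/K1) *\<^sub>R (N h - X (N h))"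
      using bX by (simp add: D_def bounded_op_linear scaleR_diff_right)
    then show ?thesis using K1 by (simp add: G_X NX)
  qed
  ultimately show ?thesis using bD by blast
qed



lemma sa_adj: "bounded_op T \<Longrightarrow> adj T = T \<Longrightarrow> sa T"
  unfolding sa_def by (metis adj_char)

lemma adj_sa: "sa T \<Longrightarrow> adj T = T"
  unfolding sa_def by (rule adj_self) blast

lemma sqrt_unique:
  assumes a: "bounded_op a" "positive_op a" and b: "bounded_op b" "positive_op b"
    and sq: "\<And>h. a (a h) = b (b h)" and comm: "\<And>h. a (b h) = b (a h)"
  shows "a = b"
proof (rule ext)
  fix h
  define g where "g = a h - b h"
  have sa_a: "sa a" and sa_b: "sa b" using positive_sa a b by auto
  have "a g + b g = 0"
    using a(1) b(1) sq comm by (simp add: g_def bounded_op_linear)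
  then have "cinner g (a g) + cinner g (b g) = 0"
    by (metis cinner_add_right cinner_zero_right)
  moreover have "Im (cinner g (a g)) = 0" "0 \<le> Re (cinner g (a g))"
    "Im (cinner g (b g)) = 0" "0 \<le> Re (cinner g (b g))"
    using a(2) b(2) by (auto simp: positive_op_def)
  ultimately have "cinner g (a g) = 0" "cinner g (b g) = 0"
    by (auto simp: complex_eq_iff)
  then have ag: "a g = 0" and bg: "b g = 0" using pos_zero a b by blast+
  have "cinner g g = cinner (a h) g - cinner (b h) g" by (simp add: g_def cinner_diff_left)
  also have "\<dots> = cinner h (a g) - cinner h (b g)" using sa_a sa_b by (simp add: sa_def)
  also have "\<dots> = 0" by (simp add: ag bg)
  finally show "a h = b h" by (simp add: g_def)
qed

locale vna =
  fixes M :: "('h::chilbert \<Rightarrow> 'h) set"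
  assumes vn: "von_neumann_algebra M"
begin

lemma M_bounded: "T \<in> M \<Longrightarrow> bounded_op T"
  using vn by (simp add: von_neumann_algebra_def)

lemma M_id: "id \<in> M"
  using vn by (simp add: von_neumann_algebra_def)

lemma M_comp: "S \<in> M \<Longrightarrow> T \<in> M \<Longrightarrow> S \<circ> T \<in> M"
  using vn by (simp add: von_neumann_algebra_def)

lemma M_adj: "T \<in> M \<Longrightarrow> adj T \<in> M"
  using vn by (simp add: von_neumann_algebra_def)

lemma comm_bounded: "T \<in> commutant M \<Longrightarrow> bounded_op T"
  by (simp add: commutant_def)

lemma comm_pt: "T \<in> commutant M \<Longrightarrow> A \<in> M \<Longrightarrow> T (A h) = A (T h)"
proof -
  assume "T \<in> commutant M" "A \<in> M"
  then have "T \<circ> A = A \<circ> T" by (simp add: commutant_def)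
  from fun_cong[OF this, of h] show ?thesis by simp
qed

lemma comm_adj:
  assumes T: "T \<in> commutant M"
  shows "adj T \<in> commutant M"
  unfolding commutant_def
proof (intro CollectI conjI ballI)
  show "bounded_op (adj T)" using adj_bounded_op comm_bounded T by blast
  fix A assume A: "A \<in> M"
  have bT: "bounded_op T" and bA: "bounded_op A" using T A comm_bounded M_bounded by auto
  have "adj A \<in> M" using M_adj A by blast
  then have c: "T \<circ> adj A = adj A \<circ> T" using T by (auto simp: fun_eq_iff comm_pt)
  have "adj T \<circ> A = adj T \<circ> adj (adj A)" by (simp add: adj_adj[OF bA])
  also have "\<dots> = adj (adj A \<circ> T)" using adj_comp[OF adj_bounded_op[OF bA] bT] by simp
  also have "\<dots> = adj (T \<circ> adj A)" using c by simp
  also have "\<dots> = adj (adj A) \<circ> adj T" using adj_comp[OF bT adj_bounded_op[OF bA]] by simp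
  also have "\<dots> = A \<circ> adj T" by (simp add: adj_adj[OF bA])
  finally show "adj T \<circ> A = A \<circ> adj T" .
qed

lemma in_M:
  assumes "bounded_op S" "\<And>T h. T \<in> commutant M \<Longrightarrow> T (S h) = S (T h)"
  shows "S \<in> M"
proof -
  have "S \<in> commutant (commutant M)"
    unfolding commutant_def[of "commutant M"] using assms by (auto simp: fun_eq_iff)
  then show ?thesis using vn by (simp add: von_neumann_algebra_def)
qed

lemma comm_bl: "T \<in> commutant M \<Longrightarrow> bounded_linear T"
  using comm_bounded bounded_op_def by blast

subsection \<open>Modulus\<close>

lemma sqrt_exists:
  assumes x: "x \<in> M"
  shows "\<exists>a\<in>M. positive_op a \<and> a \<circ> a = adj x \<circ> x"
proof -
  have bx: "bounded_op x" using x M_bounded by blast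
  have bax: "bounded_op (adj x)" using adj_bounded_op bx by blast
  define c where "c = adj x \<circ> x"
  have bc: "bounded_op c" unfolding c_def using bax bx bounded_op_comp by blast
  have cq: "cinner h (c h) = of_real ((norm (x h))\<^sup>2)" for h
    using adj_char[OF bx, of h "x h"] by (simp add: c_def cinner_self)
  obtain Kx where Kx: "\<And>h. norm (x h) \<le> norm h * Kx" "Kx > 0"
    using bx unfolding bounded_op_def using bounded_linear.pos_bounded by blast
  define K where "K = Kx\<^sup>2 + 1"
  have K: "K > 0" unfolding K_def using zero_le_power2[of Kx] by linarith
  have xb: "(norm (x h))\<^sup>2 \<le> K * (norm h)\<^sup>2" for h
  proof -
    have "(norm (x h))\<^sup>2 \<le> (norm h * Kx)\<^sup>2" using Kx by (simp add: power_mono)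
    also have "\<dots> \<le> K * (norm h)\<^sup>2" by (simp add: K_def power_mult_distrib algebra_simps)
    finally show ?thesis .
  qed
  define B where "B h = h - (1 / K) *\<^sub>R c h" for h
  have bB: "bounded_op B"
    using bc unfolding bounded_op_def B_def
    by (auto intro!: bounded_linear_sub bounded_linear_ident bounded_linear_compose[OF bounded_linear_scaleR_right]
        simp: cscale_diff_right cscale_scaleR_comm)
  have ReB: "Re (cinner h (B h)) = (norm h)\<^sup>2 - (norm (x h))\<^sup>2 / K" for h
    by (simp add: B_def cinner_diff_right cinner_scaleR_right cinner_self cq)
  have pB: "positive_op B"
    unfolding positive_op_def
  proof
    fix h
    have "Im (cinner h (B h)) = 0"
      by (simp add: B_def cinner_diff_right cinner_scaleR_right cinner_self cq)
    moreover have "(norm (x h))\<^sup>2 / K \<le> (norm h)\<^sup>2" using xb[of h] K by (simp add: divide_le_eq mult.commute)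
    ultimately show "Im (cinner h (B h)) = 0 \<and> 0 \<le> Re (cinner h (B h))" using ReB[of h] by simp
  qed
  have le1: "Re (cinner h (B h)) \<le> (norm h)\<^sup>2" for h using ReB[of h] K by simp
  obtain S0 where S0: "bounded_op S0" "positive_op S0" "\<And>h. S0 (S0 h) = h - B h"
    "\<And>L. bounded_linear L \<Longrightarrow> (\<forall>h. L (B h) = B (L h)) \<Longrightarrow> (\<forall>h. L (S0 h) = S0 (L h))"
    using op_sqrt[OF bB pB le1] by blast
  define S where "S h = sqrt K *\<^sub>R S0 h" for h
  have bS: "bounded_op S"
    using S0(1) unfolding bounded_op_def S_def
    by (auto intro!: bounded_linear_compose[OF bounded_linear_scaleR_right] simp: cscale_scaleR_comm)
  have pS: "positive_op S"
    using S0(2) K by (simp add: positive_op_def S_def cinner_scaleR_right)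
  have sqS: "S \<circ> S = c"
  proof
    fix h
    have "S (S h) = K *\<^sub>R S0 (S0 h)"
      using S0(1) K by (simp add: S_def bounded_op_linear)
    also have "\<dots> = c h" using K by (simp add: S0(3) B_def)
    finally show "(S \<circ> S) h = c h" by simp
  qed
  have SM: "S \<in> M"
  proof (rule in_M[OF bS])
    fix T h assume T: "T \<in> commutant M"
    have "T (c h) = c (T h)" for h using comm_pt[OF T x] comm_pt[OF T M_adj[OF x]] by (simp add: c_def)
    then have "\<forall>h. T (B h) = B (T h)"
      using comm_bounded[OF T] by (simp add: B_def bounded_op_linear)
    then have "T (S0 h) = S0 (T h)" using S0(4) comm_bl[OF T] by blast
    then show "T (S h) = S (T h)" using comm_bounded[OF T] by (simp add: S_def bounded_op_linear)
  qed
  show ?thesis using SM pS sqS by (auto simp: c_def)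
qed

lemma sqrt_unique_M:
  assumes x: "x \<in> M" and a: "a \<in> M" "positive_op a" "a \<circ> a = adj x \<circ> x"
    and b: "b \<in> M" "positive_op b" "b \<circ> b = adj x \<circ> x"
  shows "a = b"
proof -
  have bx: "bounded_op x" using x M_bounded by blast
  define c where "c = adj x \<circ> x"
  have ba: "bounded_op a" using a M_bounded by blast
  have bb: "bounded_op b" using b M_bounded by blast
  have bc: "bounded_op c" unfolding c_def using adj_bounded_op bx bounded_op_comp by blast
  have cq: "cinner h (c h) = of_real ((norm (x h))\<^sup>2)" for h
    using adj_char[OF bx, of h "x h"] by (simp add: c_def cinner_self)
  obtain Kx where Kx: "\<And>h. norm (x h) \<le> norm h * Kx" "Kx > 0"
    using bx unfolding bounded_op_def using bounded_linear.pos_bounded by blast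
  define K where "K = Kx\<^sup>2 + 1"
  have K: "K > 0" unfolding K_def using zero_le_power2[of Kx] by linarith
  have xb: "(norm (x h))\<^sup>2 \<le> K * (norm h)\<^sup>2" for h
  proof -
    have "(norm (x h))\<^sup>2 \<le> (norm h * Kx)\<^sup>2" using Kx by (simp add: power_mono)
    also have "\<dots> \<le> K * (norm h)\<^sup>2" by (simp add: K_def power_mult_distrib algebra_simps)
    finally show ?thesis .
  qed
  define B where "B h = h - (1 / K) *\<^sub>R c h" for h
  have bB: "bounded_op B"
    using bc unfolding bounded_op_def B_def
    by (auto intro!: bounded_linear_sub bounded_linear_ident bounded_linear_compose[OF bounded_linear_scaleR_right]
        simp: cscale_diff_right cscale_scaleR_comm)
  have ReB: "Re (cinner h (B h)) = (norm h)\<^sup>2 - (norm (x h))\<^sup>2 / K" for h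
    by (simp add: B_def cinner_diff_right cinner_scaleR_right cinner_self cq)
  have pB: "positive_op B"
    unfolding positive_op_def
  proof
    fix h
    have "Im (cinner h (B h)) = 0"
      by (simp add: B_def cinner_diff_right cinner_scaleR_right cinner_self cq)
    moreover have "(norm (x h))\<^sup>2 / K \<le> (norm h)\<^sup>2" using xb[of h] K by (simp add: divide_le_eq mult.commute)
    ultimately show "Im (cinner h (B h)) = 0 \<and> 0 \<le> Re (cinner h (B h))" using ReB[of h] by simp
  qed
  have le1: "Re (cinner h (B h)) \<le> (norm h)\<^sup>2" for h using ReB[of h] K by simp
  obtain S0 where S0: "bounded_op S0" "positive_op S0" "\<And>h. S0 (S0 h) = h - B h"
    "\<And>L. bounded_linear L \<Longrightarrow> (\<forall>h. L (B h) = B (L h)) \<Longrightarrow> (\<forall>h. L (S0 h) = S0 (L h))"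
    using op_sqrt[OF bB pB le1] by blast
  have commS0: "y (S0 h) = S0 (y h)" if "bounded_op y" "y \<circ> y = c" for y h
  proof -
    have "y (c h) = c (y h)" for h using that(2) by (metis comp_apply)
    then have "\<forall>h. y (B h) = B (y h)" using that(1) by (simp add: B_def bounded_op_linear)
    then show ?thesis using S0(4) that(1) by (simp add: bounded_op_def)
  qed
  define S where "S h = sqrt K *\<^sub>R S0 h" for h
  have bS: "bounded_op S"
    using S0(1) unfolding bounded_op_def S_def
    by (auto intro!: bounded_linear_compose[OF bounded_linear_scaleR_right] simp: cscale_scaleR_comm)
  have pS: "positive_op S"
    using S0(2) K by (simp add: positive_op_def S_def cinner_scaleR_right)
  have sqS: "S (S h) = c h" for h
  proof -
    have "S (S h) = K *\<^sub>R S0 (S0 h)"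
      using S0(1) K by (simp add: S_def bounded_op_linear)
    also have "\<dots> = c h" using K by (simp add: S0(3) B_def)
    finally show ?thesis .
  qed
  have uniq: "y = S" if "y \<in> M" "positive_op y" "y \<circ> y = c" for y
  proof (rule sqrt_unique)
    show "bounded_op y" using that M_bounded by blast
    show "y (y h) = S (S h)" for h using that(3) sqS by (metis comp_apply)
    show "y (S h) = S (y h)" for h
      using commS0[OF \<open>bounded_op y\<close> that(3)] \<open>bounded_op y\<close> by (simp add: S_def bounded_op_linear)
  qed (use that bS pS in auto)
  show ?thesis using uniq[of a] uniq[of b] a b unfolding c_def by simp
qed

lemma absv:
  assumes x: "x \<in> M"
  shows "absv M x \<in> M" "positive_op (absv M x)" "absv M x \<circ> absv M x = adj x \<circ> x"
proof -
  obtain a where a: "a \<in> M" "positive_op a" "a \<circ> a = adj x \<circ> x" using sqrt_exists[OF x] by blast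
  have "absv M x = a" unfolding absv_def
    by (rule the_equality) (use a sqrt_unique_M[OF x] in blast)+
  then show "absv M x \<in> M" "positive_op (absv M x)" "absv M x \<circ> absv M x = adj x \<circ> x" using a by auto
qed

lemma absv_eqI:
  assumes x: "x \<in> M" and a: "a \<in> M" "positive_op a" "a \<circ> a = adj x \<circ> x"
  shows "absv M x = a"
  using sqrt_unique_M[OF x absv[OF x] a] by simp

end



lemma comp_eq_pt: "(f \<circ> g = k) \<longleftrightarrow> (\<forall>x. f (g x) = k x)"
  by (auto simp: fun_eq_iff)

context vna
begin

subsection \<open>Projections and supports\<close>

lemma proj_M: "e \<in> projections M \<Longrightarrow> e \<in> M"
  by (simp add: projections_def)

lemma proj_bounded: "e \<in> projections M \<Longrightarrow> bounded_op e"
  using proj_M M_bounded by blast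

lemma proj_adj: "e \<in> projections M \<Longrightarrow> adj e = e"
  by (simp add: projections_def)

lemma proj_sa: "e \<in> projections M \<Longrightarrow> sa e"
  using sa_adj proj_bounded proj_adj by blast

lemma proj_idem: "e \<in> projections M \<Longrightarrow> e (e h) = e h"
  unfolding projections_def by (metis (mono_tags, lifting) comp_apply mem_Collect_eq)

lemma proj_uniq:
  assumes e: "e \<in> projections M" and e': "e' \<in> projections M"
    and "e \<circ> e' = e'" "e' \<circ> e = e"
  shows "e = e'"
proof -
  have "e = adj (e' \<circ> e)" using assms proj_adj by simp
  also have "\<dots> = adj e \<circ> adj e'" using adj_comp proj_bounded e e' by blast
  also have "\<dots> = e \<circ> e'" using proj_adj e e' by simp
  finally show ?thesis using assms by simp
qed

lemma lsupp_exists: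
  assumes z: "z \<in> M"
  shows "\<exists>e\<in>projections M. e \<circ> z = z \<and> (\<forall>f\<in>projections M. f \<circ> z = z \<longrightarrow> f \<circ> e = e)"
proof -
  have bz: "bounded_op z" using z M_bounded by blast
  define Kp where "Kp = {k. \<forall>w. cinner k (z w) = 0}"
  define V where "V = {h. \<forall>k\<in>Kp. cinner k h = 0}"
  have Vsub: "csubspace V"
    unfolding csubspace_def V_def by (auto simp: cinner_add_right cinner_cscale_right)
  have "V = (\<Inter>k\<in>Kp. cinner k -` {0})" by (auto simp: V_def)
  moreover have "closed (cinner k -` {0})" for k
    by (rule continuous_closed_vimage) (auto intro: isCont_cinner_right)
  ultimately have Vcl: "closed V" by auto
  define P where "P = oproj V"
  have PV: "P h \<in> V" for h using oproj(1)[OF Vsub Vcl] by (simp add: P_def)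
  have Porth: "v \<in> V \<Longrightarrow> cinner v (h - P h) = 0" for v h using oproj(2)[OF Vsub Vcl] by (simp add: P_def)
  have Peq: "p \<in> V \<Longrightarrow> (\<forall>v\<in>V. cinner v (h - p) = 0) \<Longrightarrow> P h = p" for p h
    unfolding P_def by (rule oproj_eqI[OF Vsub])
  have zV: "z w \<in> V" for w by (simp add: V_def Kp_def)
  have Pz: "P (z w) = z w" for w by (rule Peq) (auto simp: zV)
  have Padd: "P (x + y) = P x + P y" for x y
  proof (rule Peq)
    show "P x + P y \<in> V" using PV Vsub by (simp add: csubspace_def)
    show "\<forall>v\<in>V. cinner v (x + y - (P x + P y)) = 0"
    proof
      fix v assume v: "v \<in> V"
      have eq: "x + y - (P x + P y) = (x - P x) + (y - P y)" by simp
      show "cinner v (x + y - (P x + P y)) = 0" unfolding eq cinner_add_right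
        using Porth[OF v, of x] Porth[OF v, of y] by simp
    qed
  qed
  have Pcs: "P (cscale a x) = cscale a (P x)" for a x
  proof (rule Peq)
    show "cscale a (P x) \<in> V" using PV Vsub by (simp add: csubspace_def)
    show "\<forall>v\<in>V. cinner v (cscale a x - cscale a (P x)) = 0"
      using Porth by (simp add: cscale_diff_right[symmetric] cinner_cscale_right)
  qed
  have Pnorm: "norm (P h) \<le> norm h * 1" for h
  proof -
    have "cinner (P h) (h - P h) = 0" using Porth PV by blast
    then have "(norm h)\<^sup>2 = (norm (P h))\<^sup>2 + (norm (h - P h))\<^sup>2"
      using norm_add_sq[of "P h" "h - P h"] by simp
    then have "(norm (P h))\<^sup>2 \<le> (norm h)\<^sup>2" by simp
    then show ?thesis by (simp add: power2_le_iff_abs_le)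
  qed
  have bP: "bounded_op P"
    unfolding bounded_op_def
    by (auto intro!: bounded_linear_intro[where K=1] Padd Pnorm simp: Pcs)
      (metis Pcs cscale_of_real)
  have Pidem: "P (P h) = P h" for h by (rule Peq) (auto simp: PV)
  have saP: "sa P"
    unfolding sa_def
  proof (intro allI)
    fix x y
    have "cinner (P x) (y - P y) = 0" using Porth PV by blast
    then have 1: "cinner (P x) y = cinner (P x) (P y)" by (simp add: cinner_diff_right)
    have "cinner (P y) (x - P x) = 0" using Porth PV by blast
    then have "cinner (x - P x) (P y) = 0" by (subst cinner_conj) simp
    then have 2: "cinner x (P y) = cinner (P x) (P y)" by (simp add: cinner_diff_left)
    show "cinner (P x) y = cinner x (P y)" using 1 2 by simp
  qed
  have PM: "P \<in> M"
  proof (rule in_M[OF bP])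
    fix T h assume T: "T \<in> commutant M"
    have bT: "bounded_op T" using T comm_bounded by blast
    have T': "adj T \<in> commutant M" using comm_adj T by blast
    have k1: "adj T k \<in> Kp" if "k \<in> Kp" for k
      using that comm_pt[OF T z] by (simp add: Kp_def adj_char'[OF bT])
    have k2: "T k \<in> Kp" if "k \<in> Kp" for k
      using that comm_pt[OF T' z] by (simp add: Kp_def adj_char[OF bT])
    have TV: "T v \<in> V" if "v \<in> V" for v
      using that k1 by (simp add: V_def adj_char'[OF bT, symmetric])
    have aTV: "adj T v \<in> V" if "v \<in> V" for v
      using that k2 by (simp add: V_def adj_char[OF bT, symmetric])
    have "P (T h) = T (P h)"
    proof (rule Peq)
      show "T (P h) \<in> V" by (rule TV[OF PV])
      show "\<forall>v\<in>V. cinner v (T h - T (P h)) = 0"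
      proof
        fix v assume "v \<in> V"
        have "cinner v (T h - T (P h)) = cinner v (T (h - P h))" using bT by (simp add: bounded_op_linear)
        also have "\<dots> = cinner (adj T v) (h - P h)" by (simp add: adj_char'[OF bT])
        also have "\<dots> = 0" by (rule Porth[OF aTV[OF \<open>v \<in> V\<close>]])
        finally show "cinner v (T h - T (P h)) = 0" .
      qed
    qed
    then show "T (P h) = P (T h)" by simp
  qed
  have Pproj: "P \<in> projections M"
    unfolding projections_def using PM adj_sa[OF saP] Pidem by (auto simp: fun_eq_iff)
  have min: "f \<circ> P = P" if f: "f \<in> projections M" "f \<circ> z = z" for f
  proof -
    have saf: "sa f" using proj_sa f by blast
    have bf: "bounded_op f" using proj_bounded f by blast
    have fz: "f (z w) = z w" for w using f(2) by (metis comp_apply)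
    have "f v = v" if v: "v \<in> V" for v
    proof -
      define k where "k = v - f v"
      have "k \<in> Kp"
        unfolding Kp_def
      proof (intro CollectI allI)
        fix w
        have "cinner (f v) (z w) = cinner v (f (z w))" using saf by (simp add: sa_def)
        then show "cinner k (z w) = 0" by (simp add: k_def cinner_diff_left fz)
      qed
      then have 1: "cinner k v = 0" using v by (simp add: V_def)
      have "f k = 0" using bf proj_idem[OF f(1)] by (simp add: k_def bounded_op_linear)
      then have "cinner k (f v) = 0" using saf by (metis sa_def cinner_zero_left)
      with 1 have "cinner k k = 0" by (simp add: k_def cinner_diff_right)
      then show ?thesis by (simp add: k_def)
    qed
    then show ?thesis using PV by (auto simp: fun_eq_iff)
  qed
  show ?thesis using Pproj Pz min by (intro bexI[of _ P] conjI ballI impI) (auto simp: fun_eq_iff)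
qed

lemma lsupp:
  assumes z: "z \<in> M"
  shows "lsupp M z \<in> projections M" "lsupp M z \<circ> z = z"
    "\<And>f. f \<in> projections M \<Longrightarrow> f \<circ> z = z \<Longrightarrow> f \<circ> lsupp M z = lsupp M z"
proof -
  obtain e where e: "e \<in> projections M" "e \<circ> z = z" "\<forall>f\<in>projections M. f \<circ> z = z \<longrightarrow> f \<circ> e = e"
    using lsupp_exists[OF z] by blast
  have "lsupp M z = e"
    unfolding lsupp_def
  proof (rule the_equality)
    show "e \<in> projections M \<and> e \<circ> z = z \<and> (\<forall>f\<in>projections M. f \<circ> z = z \<longrightarrow> f \<circ> e = e)" using e by blast
    fix e' assume e': "e' \<in> projections M \<and> e' \<circ> z = z \<and> (\<forall>f\<in>projections M. f \<circ> z = z \<longrightarrow> f \<circ> e' = e')"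
    then show "e' = e" using e proj_uniq by metis
  qed
  then show "lsupp M z \<in> projections M" "lsupp M z \<circ> z = z"
    "\<And>f. f \<in> projections M \<Longrightarrow> f \<circ> z = z \<Longrightarrow> f \<circ> lsupp M z = lsupp M z" using e by auto
qed

lemma lsupp_eqI:
  assumes e: "e \<in> projections M" and zw: "z \<circ> w = e" and ez: "e \<circ> z = z"
  shows "lsupp M z = e"
  unfolding lsupp_def
proof (rule the_equality)
  have "f \<circ> e = e" if "f \<in> projections M" "f \<circ> z = z" for f
    using that zw by (metis comp_assoc)
  then show "e \<in> projections M \<and> e \<circ> z = z \<and> (\<forall>f\<in>projections M. f \<circ> z = z \<longrightarrow> f \<circ> e = e)"
    using e ez by blast
  fix e' assume e': "e' \<in> projections M \<and> e' \<circ> z = z \<and> (\<forall>f\<in>projections M. f \<circ> z = z \<longrightarrow> f \<circ> e' = e')"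
  have "e' \<circ> e = e" using e' zw by (metis comp_assoc)
  moreover have "e \<circ> e' = e'" using e' e ez by blast
  ultimately show "e' = e" using proj_uniq e e' by metis
qed

lemma rsupp_eqI:
  assumes e: "e \<in> projections M" and wz: "w \<circ> z = e" and ze: "z \<circ> e = z"
  shows "rsupp M z = e"
  unfolding rsupp_def
proof (rule the_equality)
  have "f \<circ> e = e" if f: "f \<in> projections M" "z \<circ> f = z" for f
  proof -
    have ef: "e \<circ> f = e" using wz f(2) by (metis comp_assoc)
    have "f \<circ> e = adj f \<circ> adj e" using proj_adj f e by simp
    also have "\<dots> = adj (e \<circ> f)" using adj_comp proj_bounded f e by metis
    also have "\<dots> = e" using ef proj_adj e by simp
    finally show ?thesis .
  qed
  then show "e \<in> projections M \<and> z \<circ> e = z \<and> (\<forall>f\<in>projections M. z \<circ> f = z \<longrightarrow> f \<circ> e = e)"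
    using e ze by blast
  fix e' assume e': "e' \<in> projections M \<and> z \<circ> e' = z \<and> (\<forall>f\<in>projections M. z \<circ> f = z \<longrightarrow> f \<circ> e' = e')"
  have "e \<circ> e' = e'" using e' e ze by blast
  moreover have "e' \<circ> e = e" using \<open>\<And>f. _ \<Longrightarrow> _ \<Longrightarrow> f \<circ> e = e\<close> e' by blast
  ultimately show "e' = e" using proj_uniq e e' by metis
qed

end



lemma comp_pt: "f \<circ> g = k \<Longrightarrow> f (g h) = k h"
  by (metis comp_apply)

context vna
begin

lemma norm_absv:
  assumes x: "x \<in> M"
  shows "norm (absv M x k) = norm (x k)"
proof -
  let ?a = "absv M x"
  have ba: "bounded_op ?a" using absv(1)[OF x] M_bounded by blast
  have saa: "sa ?a" using positive_sa[OF ba absv(2)[OF x]] .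
  have bx: "bounded_op x" using x M_bounded by blast
  have "cinner (?a k) (?a k) = cinner k (?a (?a k))" using saa by (simp add: sa_def)
  also have "?a (?a k) = adj x (x k)" using comp_pt[OF absv(3)[OF x]] by simp
  also have "cinner k (adj x (x k)) = cinner (x k) (x k)" by (simp add: adj_char[OF bx])
  finally have "cinner (?a k) (?a k) = cinner (x k) (x k)" .
  then have "(norm (?a k))\<^sup>2 = (norm (x k))\<^sup>2" by (metis cinner_self_Re)
  then show ?thesis by (simp add: power2_eq_iff_nonneg)
qed

lemma G_intro:
  assumes z: "z \<in> M" and w: "w \<in> M" and e: "e \<in> projections M"
    and wz: "w \<circ> z = e" and ze: "z \<circ> e = z"
  shows "z \<in> partially_invertible M"
proof -
  define a where "a = absv M z"
  have aM: "a \<in> M" and pa: "positive_op a" and aa: "a \<circ> a = adj z \<circ> z"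
    using absv[OF z] by (auto simp: a_def)
  have bz: "bounded_op z" using z M_bounded by blast
  have bw: "bounded_op w" using w M_bounded by blast
  have be: "bounded_op e" using e proj_bounded by blast
  have ba: "bounded_op a" using aM M_bounded by blast
  have saa: "sa a" using positive_sa[OF ba pa] .
  have sae: "sa e" using proj_sa[OF e] .
  have ee: "e (e h) = e h" for h using proj_idem[OF e] .
  define c where "c = adj z \<circ> z"
  have cM: "c \<in> M" unfolding c_def using M_comp M_adj z by blast
  have bc: "bounded_op c" using cM M_bounded by blast
  have caa: "c h = a (a h)" for h using comp_pt[OF aa] by (simp add: c_def)
  have cq: "cinner h (c h) = of_real ((norm (z h))\<^sup>2)" for h
    using adj_char[OF bz, of h "z h"] by (simp add: c_def cinner_self)
  have zeh: "z (e h) = z h" for h using comp_pt[OF ze] .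
  have ae: "a (e h) = a h" for h
  proof -
    have "norm (a (h - e h)) = norm (z (h - e h))" unfolding a_def by (rule norm_absv[OF z])
    also have "\<dots> = 0" using bz by (simp add: bounded_op_linear zeh)
    finally show ?thesis using ba by (simp add: bounded_op_linear)
  qed
  have ea: "e (a h) = a h" for h
  proof -
    have "cinner k (e (a h)) = cinner k (a h)" for k
      using saa sae ae by (simp add: sa_def) (metis sa_def saa sae)
    then show ?thesis by (intro cinner_ext) simp
  qed
  obtain Kw where Kw: "\<And>y. norm (w y) \<le> norm y * Kw" "Kw > 0"
    using bw unfolding bounded_op_def using bounded_linear.pos_bounded by blast
  have ew: "e h = w (z h)" for h using comp_pt[OF wz] by simp
  define G where "G h = c h + (h - e h)" for h
  have bG: "bounded_op G"
    using bc be unfolding bounded_op_def G_def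
    by (auto intro!: bounded_linear_add bounded_linear_sub bounded_linear_ident
        simp: cscale_add_right cscale_diff_right)
  have orth: "cinner (e h) (h - e h) = 0" for h
    using sae ee by (simp add: sa_def cinner_diff_right)
  have inner_G: "cinner h (G h) = of_real ((norm (z h))\<^sup>2 + (norm (h - e h))\<^sup>2)" for h
  proof -
    have "cinner h (h - e h) = cinner (h - e h) (h - e h) + cinner (e h) (h - e h)"
      by (simp add: cinner_diff_left)
    then have "cinner h (h - e h) = of_real ((norm (h - e h))\<^sup>2)" using orth by (simp add: cinner_self)
    then show ?thesis by (simp add: G_def cinner_add_right cq)
  qed
  have pG: "positive_op G" by (simp add: positive_op_def inner_G)
  define \<delta> where "\<delta> = 1 / (Kw\<^sup>2 + 1)"
  have dpos: "\<delta> > 0" using zero_le_power2[of Kw] by (simp add: \<delta>_def add_nonneg_pos)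
  have dle1: "\<delta> \<le> 1" proof - have t0: "0 < Kw\<^sup>2 + 1" and t1: "1 \<le> Kw\<^sup>2 + 1" using zero_le_power2[of Kw] by linarith+ show ?thesis unfolding \<delta>_def by (subst divide_le_eq_1_pos[OF t0]) (rule t1) qed
  have dK: "\<delta> * Kw\<^sup>2 \<le> 1" proof - have t0: "0 < Kw\<^sup>2 + 1" using zero_le_power2[of Kw] by linarith have "Kw\<^sup>2 / (Kw\<^sup>2 + 1) \<le> 1" by (subst divide_le_eq_1_pos[OF t0]) simp then show ?thesis by (simp add: \<delta>_def) qed
  have lb: "\<delta> * (norm h)\<^sup>2 \<le> Re (cinner h (G h))" for h
  proof -
    have pyth: "(norm h)\<^sup>2 = (norm (e h))\<^sup>2 + (norm (h - e h))\<^sup>2"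
      using norm_add_sq[of "e h" "h - e h"] orth by simp
    have "norm (e h) \<le> norm (z h) * Kw" using Kw(1)[of "z h"] ew by simp
    then have "(norm (e h))\<^sup>2 \<le> (norm (z h) * Kw)\<^sup>2" by (simp add: power_mono)
    then have "\<delta> * (norm (e h))\<^sup>2 \<le> \<delta> * Kw\<^sup>2 * (norm (z h))\<^sup>2"
      using dpos by (simp add: power_mult_distrib mult_left_mono mult_ac)
    also have "\<dots> \<le> (norm (z h))\<^sup>2" using dK dpos by (intro mult_left_le_one_le) auto
    finally have 1: "\<delta> * (norm (e h))\<^sup>2 \<le> (norm (z h))\<^sup>2" .
    have 2: "\<delta> * (norm (h - e h))\<^sup>2 \<le> (norm (h - e h))\<^sup>2" using dle1 dpos by (intro mult_left_le_one_le) auto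
    show ?thesis using 1 2 pyth by (simp add: inner_G distrib_left)
  qed
  obtain D where D: "bounded_op D" "\<And>h. D (G h) = h" "\<And>h. G (D h) = h"
    using op_inv[OF bG pG dpos lb] by blast
  have Dcomm: "L (D h) = D (L h)" if "\<And>h. L (G h) = G (L h)" for L h
  proof -
    have "L (D h) = D (G (L (D h)))" by (simp add: D(2))
    also have "\<dots> = D (L (G (D h)))" by (simp add: that)
    finally show ?thesis by (simp add: D(3))
  qed
  have DM: "D \<in> M"
  proof (rule in_M[OF D(1)])
    fix T h assume T: "T \<in> commutant M"
    have bT: "bounded_op T" using T comm_bounded by blast
    have "T (G h) = G (T h)" for h
      using comm_pt[OF T z] comm_pt[OF T M_adj[OF z]] comm_pt[OF T proj_M[OF e]] bT
      by (simp add: G_def c_def bounded_op_linear)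
    then show "T (D h) = D (T h)" by (rule Dcomm)
  qed
  have aG: "a (G h) = G (a h)" for h
    using ba by (simp add: G_def bounded_op_linear caa ae ea)
  have eG: "e (G h) = G (e h)" for h
    using be by (simp add: G_def bounded_op_linear caa ae ea ee)
  have aD: "a (D h) = D (a h)" for h using Dcomm aG by blast
  have eD: "e (D h) = D (e h)" for h using Dcomm eG by blast
  have Ge: "G (e h) = c h" for h by (simp add: G_def caa ae ee)
  have Dc: "D (c h) = e h" for h using D(2)[of "e h"] Ge by simp
  have cD: "c (D h) = D (c h)" for h using aD by (simp add: caa)
  define b where "b = a \<circ> D \<circ> e"
  have bM: "b \<in> M" unfolding b_def using aM DM proj_M[OF e] M_comp by blast
  have ab: "a \<circ> b = e"
  proof
    fix h
    have "a (a (D (e h))) = c (D (e h))" by (simp add: caa)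
    also have "\<dots> = D (c (e h))" by (rule cD)
    also have "c (e h) = c h" by (simp add: caa ae)
    finally show "(a \<circ> b) h = e h" by (simp add: b_def Dc)
  qed
  have ba': "b \<circ> a = e"
  proof
    fix h
    have "a (D (e (a h))) = D (a (a h))" by (simp add: ea aD)
    also have "\<dots> = e h" using Dc by (simp add: caa[symmetric])
    finally show "(b \<circ> a) h = e h" by (simp add: b_def)
  qed
  have ebe: "e \<circ> b \<circ> e = b"
    by (rule ext) (simp add: b_def ea ee)
  have ea': "e \<circ> a = a" by (rule ext) (simp add: ea)
  have supp: "supp M a = e" unfolding supp_def by (rule lsupp_eqI[OF e ab ea'])
  have "is_inverse_in_corner M (supp M (absv M z)) (absv M z) b"
    unfolding is_inverse_in_corner_def supp a_def[symmetric] using bM ebe ab ba' by simp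
  then show ?thesis using z by (auto simp: partially_invertible_def)
qed

end



context vna
begin

lemma G_props:
  assumes xG: "x \<in> partially_invertible M"
  shows "x \<in> M" "rsupp M x \<in> projections M" "lsupp M x \<in> projections M" "pinv M x \<in> M"
    "x \<circ> rsupp M x = x" "pinv M x \<circ> x = rsupp M x" "x \<circ> pinv M x = lsupp M x"
    "lsupp M x \<circ> x = x" "pinv M x \<circ> lsupp M x = pinv M x" "rsupp M x \<circ> pinv M x = pinv M x"
proof -
  have x: "x \<in> M" using xG by (simp add: partially_invertible_def)
  define a where "a = absv M x"
  define p where "p = supp M a"
  obtain b where binv: "is_inverse_in_corner M p a b"
    using xG by (auto simp: partially_invertible_def p_def a_def)
  have aM: "a \<in> M" and pa: "positive_op a" and aa: "a \<circ> a = adj x \<circ> x"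
    using absv[OF x] by (auto simp: a_def)
  have bx: "bounded_op x" using x M_bounded by blast
  have ba: "bounded_op a" using aM M_bounded by blast
  have saa: "sa a" using positive_sa[OF ba pa] .
  have adja: "adj a = a" using adj_sa[OF saa] .
  have pP: "p \<in> projections M" "p \<circ> a = a" using lsupp[OF aM] by (auto simp: p_def supp_def)
  have bp_: "bounded_op p" using proj_bounded[OF pP(1)] .
  have sap: "sa p" using proj_sa[OF pP(1)] .
  have pp: "p (p h) = p h" for h using proj_idem[OF pP(1)] .
  have pa': "p (a h) = a h" for h using comp_pt[OF pP(2)] .
  have bM: "b \<in> M" and pbp: "p \<circ> b \<circ> p = b" and ba_: "b \<circ> a = p" and ab_: "a \<circ> b = p"
    using binv by (auto simp: is_inverse_in_corner_def)
  have bb: "bounded_op b" using bM M_bounded by blast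
  have pbp': "p (b (p h)) = b h" for h using comp_pt[OF pbp] by simp
  have bp: "b (p h) = b h" for h using pbp'[of "p h"] pp pbp'[of h] by simp
  have pb: "p (b h) = b h" for h using pbp'[of h] bp[of h] by simp
  have ba': "b (a h) = p h" for h using comp_pt[OF ba_] .
  have ab': "a (b h) = p h" for h using comp_pt[OF ab_] .
  have ap: "a (p h) = a h" for h
  proof -
    have "cinner k (a (p h)) = cinner k (a h)" for k
      using saa sap pa' by (metis sa_def)
    then show ?thesis by (intro cinner_ext) simp
  qed
  have adjxx: "adj x (x h) = a (a h)" for h using comp_pt[OF aa] by simp
  have sab: "sa b"
  proof -
    define b' where "b' = adj b"
    have bb': "bounded_op b'" using adj_bounded_op[OF bb] by (simp add: b'_def)
    have b'a: "b' (a h) = p h" for h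
    proof -
      have "b' \<circ> a = adj b \<circ> adj a" using adja by (simp add: b'_def)
      also have "\<dots> = adj (a \<circ> b)" using adj_comp[OF ba bb] by simp
      also have "\<dots> = p" using ab_ proj_adj[OF pP(1)] by simp
      finally show ?thesis using comp_pt by metis
    qed
    have b'p: "b' (p h) = b' h" for h
    proof -
      have pb_f: "p \<circ> b = b" by (rule ext) (simp add: pb)
      have "b' \<circ> p = adj b \<circ> adj p" using proj_adj[OF pP(1)] by (simp add: b'_def)
      also have "\<dots> = adj (p \<circ> b)" using adj_comp[OF bp_ bb] by simp
      also have "\<dots> = b'" using pb_f by (simp add: b'_def)
      finally show ?thesis using comp_pt by metis
    qed
    have "b' h = b h" for h
    proof -
      have "b' h = b' (p h)" by (simp add: b'p)
      also have "\<dots> = b' (a (b h))" by (simp add: ab')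
      also have "\<dots> = p (b h)" by (simp add: b'a)
      finally show ?thesis by (simp add: pb)
    qed
    then have "adj b = b" by (auto simp: b'_def)
    then show ?thesis using sa_adj[OF bb] by simp
  qed
  have adjb: "adj b = b" using adj_sa[OF sab] .
  have xp: "x (p h) = x h" for h
  proof -
    have "norm (x (h - p h)) = norm (a (h - p h))" using norm_absv[OF x] by (simp add: a_def)
    also have "\<dots> = 0" using ba by (simp add: bounded_op_linear ap)
    finally show ?thesis using bx by (simp add: bounded_op_linear)
  qed
  define w where "w = b \<circ> b \<circ> adj x"
  have wM: "w \<in> M" unfolding w_def using bM M_adj[OF x] M_comp by blast
  have bw: "bounded_op w" using wM M_bounded by blast
  have wx: "w (x h) = p h" for h by (simp add: w_def adjxx ab' bp ba')
  define q where "q = x \<circ> w"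
  have qM: "q \<in> M" unfolding q_def using M_comp x wM by blast
  have bq: "bounded_op q" using qM M_bounded by blast
  have saq: "sa q"
    unfolding sa_def
  proof (intro allI)
    fix h k
    have "cinner (q h) k = cinner (b (b (adj x h))) (adj x k)" by (simp add: q_def w_def adj_char[OF bx])
    also have "\<dots> = cinner (b (adj x h)) (b (adj x k))" using sab by (simp add: sa_def)
    also have "\<dots> = cinner (adj x h) (b (b (adj x k)))" using sab by (simp add: sa_def)
    also have "\<dots> = cinner h (q k)" by (simp add: q_def w_def adj_char'[OF bx])
    finally show "cinner (q h) k = cinner h (q k)" .
  qed
  have qq: "q \<circ> q = q" by (rule ext) (simp add: q_def wx xp)
  have qP: "q \<in> projections M" unfolding projections_def using qM adj_sa[OF saq] qq by simp
  have qx: "q \<circ> x = x" by (rule ext) (simp add: q_def wx xp)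
  have wx_f: "w \<circ> x = p" by (rule ext) (simp add: wx)
  have xp_f: "x \<circ> p = x" by (rule ext) (simp add: xp)
  have rs: "rsupp M x = p" by (rule rsupp_eqI[OF pP(1) wx_f xp_f])
  have ls: "lsupp M x = q" by (rule lsupp_eqI[OF qP _ qx]) (simp add: q_def)
  have ci: "corner_inv M p a = b"
    unfolding corner_inv_def
  proof (rule the_equality)
    show "is_inverse_in_corner M p a b" by (rule binv)
    fix b'' assume b'': "is_inverse_in_corner M p a b''"
    have pbp'': "p (b'' (p h)) = b'' h" for h using b'' comp_pt by (metis is_inverse_in_corner_def)
    have b''p: "b'' (p h) = b'' h" for h using pbp''[of "p h"] pp pbp''[of h] by simp
    have b''a: "b'' (a h) = p h" for h using b'' comp_pt by (metis is_inverse_in_corner_def)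
    show "b'' = b"
    proof
      fix h
      have "b'' h = b'' (p h)" by (simp add: b''p)
      also have "\<dots> = b'' (a (b h))" by (simp add: ab')
      also have "\<dots> = p (b h)" by (simp add: b''a)
      finally show "b'' h = b h" by (simp add: pb)
    qed
  qed
  have adjxb: "adj (x \<circ> b) = b \<circ> adj x" using adj_comp[OF bx bb] adjb by simp
  have pol: "polar M x = x \<circ> b"
    unfolding polar_def
  proof (rule the_equality)
    show "x \<circ> b \<in> M \<and> x = x \<circ> b \<circ> absv M x \<and> adj (x \<circ> b) \<circ> (x \<circ> b) = rsupp M x \<and>
        x \<circ> b \<circ> adj (x \<circ> b) = lsupp M x"
    proof (intro conjI)
      show "x \<circ> b \<in> M" using M_comp x bM by blast
      show "x = x \<circ> b \<circ> absv M x" by (rule ext) (simp add: a_def[symmetric] ba' xp)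
      show "adj (x \<circ> b) \<circ> (x \<circ> b) = rsupp M x"
        by (rule ext) (simp add: adjxb rs adjxx ab' ap ba')
      show "x \<circ> b \<circ> adj (x \<circ> b) = lsupp M x"
        by (rule ext) (simp add: adjxb ls q_def w_def)
    qed
    fix u assume u: "u \<in> M \<and> x = u \<circ> absv M x \<and> adj u \<circ> u = rsupp M x \<and> u \<circ> adj u = lsupp M x"
    have bu: "bounded_op u" using u M_bounded by blast
    have xu: "x h = u (a h)" for h using u comp_pt by (metis a_def)
    have uu: "adj u (u h) = p h" for h using u comp_pt rs by metis
    have up: "u (p h) = u h" for h
    proof -
      define k where "k = h - p h"
      have "cinner (u k) (u k) = cinner k (adj u (u k))" by (simp add: adj_char[OF bu])
      also have "\<dots> = 0" using bp_ by (simp add: uu k_def bounded_op_linear pp)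
      finally have "u k = 0" by simp
      then show ?thesis using bu by (simp add: k_def bounded_op_linear)
    qed
    show "u = x \<circ> b"
    proof
      fix h
      have "u h = u (p h)" by (simp add: up)
      also have "\<dots> = u (a (b h))" by (simp add: ab')
      finally show "u h = (x \<circ> b) h" by (simp add: xu)
    qed
  qed
  have pinv_eq: "pinv M x = w"
    unfolding pinv_def a_def[symmetric] p_def[symmetric] ci pol adjxb w_def by (simp add: comp_assoc)
  show "x \<in> M" by (rule x)
  show "rsupp M x \<in> projections M" using rs pP by simp
  show "lsupp M x \<in> projections M" using ls qP by simp
  show "pinv M x \<in> M" using pinv_eq wM by simp
  show "x \<circ> rsupp M x = x" using rs xp_f by simp
  show "pinv M x \<circ> x = rsupp M x" using pinv_eq wx_f rs by simp
  show "x \<circ> pinv M x = lsupp M x" using pinv_eq ls by (simp add: q_def)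
  show "lsupp M x \<circ> x = x" using ls qx by simp
  show "pinv M x \<circ> lsupp M x = pinv M x" using pinv_eq ls
    by (auto simp: fun_eq_iff q_def wx) (simp add: w_def pb)
  show "rsupp M x \<circ> pinv M x = pinv M x" using pinv_eq rs by (auto simp: fun_eq_iff w_def pb)
qed

end



theorem proposition2p1:
  fixes M :: "('h::chilbert \<Rightarrow> 'h) set"
  assumes "von_neumann_algebra M"
  shows "groupoid (partially_invertible M) (projections M) (rsupp M) (lsupp M)
           (\<lambda>x y. x \<circ> y) (\<lambda>p. p) (pinv M)"
proof -
  interpret vna M by unfold_locales (rule assms)
  let ?G = "partially_invertible M"
  have c1: "\<forall>g\<in>?G. rsupp M g \<in> projections M \<and> lsupp M g \<in> projections M"
    using G_props by blast
  have c2: "\<forall>g\<in>?G. \<forall>h\<in>?G. rsupp M g = lsupp M h \<longrightarrow>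
        g \<circ> h \<in> ?G \<and> rsupp M (g \<circ> h) = rsupp M h \<and> lsupp M (g \<circ> h) = lsupp M g"
  proof (intro ballI impI)
    fix g h assume g: "g \<in> ?G" and h: "h \<in> ?G" and gh: "rsupp M g = lsupp M h"
    note G1 = G_props[OF g] and G2 = G_props[OF h]
    define w where "w = pinv M h \<circ> pinv M g"
    have zM: "g \<circ> h \<in> M" using M_comp G1(1) G2(1) by blast
    have wM: "w \<in> M" unfolding w_def using M_comp G1(4) G2(4) by blast
    have wz: "w \<circ> (g \<circ> h) = rsupp M h"
    proof
      fix k
      have "w ((g \<circ> h) k) = pinv M h (rsupp M g (h k))" using comp_pt[OF G1(6)] by (simp add: w_def)
      also have "\<dots> = pinv M h (h k)" using comp_pt[OF G2(8)] gh by simp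
      finally show "(w \<circ> (g \<circ> h)) k = rsupp M h k" using comp_pt[OF G2(6)] by simp
    qed
    have ze: "(g \<circ> h) \<circ> rsupp M h = g \<circ> h" using G2(5) by (simp add: comp_assoc)
    have zw: "(g \<circ> h) \<circ> w = lsupp M g"
    proof
      fix k
      have "((g \<circ> h) \<circ> w) k = g (lsupp M h (pinv M g k))" using comp_pt[OF G2(7)] by (simp add: w_def)
      also have "\<dots> = g (pinv M g k)" using comp_pt[OF G1(10)] gh[symmetric] by simp
      finally show "((g \<circ> h) \<circ> w) k = lsupp M g k" using comp_pt[OF G1(7)] by simp
    qed
    have ez: "lsupp M g \<circ> (g \<circ> h) = g \<circ> h" using G1(8) by (simp add: comp_assoc[symmetric])
    show "g \<circ> h \<in> ?G \<and> rsupp M (g \<circ> h) = rsupp M h \<and> lsupp M (g \<circ> h) = lsupp M g"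
      using G_intro[OF zM wM G2(2) wz ze] rsupp_eqI[OF G2(2) wz ze] lsupp_eqI[OF G1(3) zw ez] by blast
  qed
  have c3: "\<forall>g\<in>?G. \<forall>h\<in>?G. \<forall>k\<in>?G. rsupp M g = lsupp M h \<and> rsupp M h = lsupp M k \<longrightarrow>
        (g \<circ> h) \<circ> k = g \<circ> (h \<circ> k)"
    by (simp add: comp_assoc)
  have c4: "\<forall>b\<in>projections M. b \<in> ?G \<and> rsupp M b = b \<and> lsupp M b = b"
  proof
    fix b assume b: "b \<in> projections M"
    have bb: "b \<circ> b = b" using b by (simp add: projections_def)
    show "b \<in> ?G \<and> rsupp M b = b \<and> lsupp M b = b"
      using G_intro[OF proj_M[OF b] proj_M[OF b] b bb bb] rsupp_eqI[OF b bb bb] lsupp_eqI[OF b bb bb]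
      by blast
  qed
  have c5: "inj_on (\<lambda>p. p) (projections M)" by simp
  have c6: "\<forall>g\<in>?G. lsupp M g \<circ> g = g \<and> g \<circ> rsupp M g = g"
    using G_props by blast
  have c7: "\<forall>g\<in>?G. pinv M g \<in> ?G \<and> rsupp M (pinv M g) = lsupp M g \<and> lsupp M (pinv M g) = rsupp M g \<and>
        pinv M g \<circ> g = rsupp M g \<and> g \<circ> pinv M g = lsupp M g"
  proof
    fix g assume g: "g \<in> ?G"
    note G1 = G_props[OF g]
    show "pinv M g \<in> ?G \<and> rsupp M (pinv M g) = lsupp M g \<and> lsupp M (pinv M g) = rsupp M g \<and>
        pinv M g \<circ> g = rsupp M g \<and> g \<circ> pinv M g = lsupp M g"
      using G_intro[OF G1(4) G1(1) G1(3) G1(7) G1(9)] rsupp_eqI[OF G1(3) G1(7) G1(9)]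
        lsupp_eqI[OF G1(2) G1(6) G1(10)] G1(6) G1(7) by blast
  qed
  show ?thesis
    unfolding groupoid_def using c1 c2 c3 c4 c5 c6 c7 by simp
qed


end
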